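(* Let $q$ be a prime power, $n\ge 4$, $D=2q^2-2$, $I_1=\{0,\dots,q^2-2\}$, $I_2=\{q^2-1,\dots,2q^2-3\}$, and let $s=|\Phi(n-2,q)|$. Let $t=0$ if $q$ is even and $t=\frac{q+1}{2}$ if $q$ is odd. All congruences below are modulo $q^2-1$ unless stated otherwise. The intersection numbers $p_{ij}^h$ of $\mathcal X(GU(n,q),\Phi(n,q))$ are: (1) $i,j\in I_1$: $p_{ij}^h=1$ if $h\in I_1$ and $h\equiv i+j$, and $p_{ij}^h=0$ otherwise. (2) $i\in I_1$, $j\in I_2$: $p_{ij}^h=1$ if $h\in I_2$ and $h+i\equiv j$, and $0$ otherwise. (3) $i\in I_1$, $j=D$: $p_{ij}^h=1$ if $h=D$, and $0$ otherwise. (4) $i\in I_2$, $j\in I_1$: $p_{ij}^h=1$ if $h\in I_2$ and $h\equiv i+jq$, and $0$ otherwise. (5) $i,j\in I_2$: for $h\in I_1$, $p_{ij}^h=q^{2n-3}$ if $q(h+i)\equiv j$ and $0$ otherwise; for $h\in I_2$, $p_{ij}^h=s+1$ if $i+j\equiv h+t\pmod{q+1}$ and $p_{ij}^h=q^{2n-5}+(-q)^{n-3}$ otherwise; for $h=D$, $p_{ij}^h=q^{2n-5}$. (6) $i\in I_2$, $j=D$: $p_{ij}^h=0$ for $h\in I_1$, $p_{ij}^h=s$ for $h\in I_2$, $p_{ij}^D=q^{2n-5}$. (7) $i=D$, $j\in I_1$: $p_{ij}^h=1$ if $h=D$ and $0$ otherwise. (8) $i=D$, $j\in I_2$: $p_{ij}^h=0$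 for $h\in I_1$, $s$ for $h\in I_2$, and $q^{2n-5}$ for $h=D$. (9) $i=j=D$: $p_{DD}^h=q^2 s$ for $h\in I_1$, $p_{DD}^h=s$ for $h\in I_2$, and $p_{DD}^D=(q^2-1)^2+q^4|\Phi(n-4,q)|$ (with $|\Phi(0,q)|=0$).
   Context: For $m\ge0$, $\Phi(m,q)=\{x\in\mathbb{F}_{q^2}^m\setminus\{0\}:\langle x,x\rangle=0\}$ where $\langle x,y\rangle=\sum_k x_k y_k^{\,q}$ (so $\Phi(0,q)=\emptyset$). Let $\Phi=\Phi(n,q)$ and fix a primitive element $\alpha$ of $\mathbb{F}_{q^2}$. The relations of $\mathcal X(GU(n,q),\Phi(n,q))$ (orbitals of $GU(n,q)$ acting on $\Phi$ by $x\mapsto xU$) are indexed by $l\in\{0,\dots,D\}$: $\mathcal R_l=\{(x,y)\in\Phi\times\Phi:y=\alpha^lx\}$ for $0\le l\le q^2-2$; $\mathcal R_l=\{(x,y)\in\Phi\times\Phi:\langle x,y\rangle=\alpha^l\}$ for $q^2-1\le l\le 2q^2-3$; $\mathcal R_D=\{(x,y)\in\Phi\times\Phi:\langle x,y\rangle=0,\ y\notin\mathrm{Span}\{x\}\}$. The intersection number $p_{ij}^h$ is $|\{z\in\Phi:(x,z)\in\mathcal R_i,(z,y)\in\mathcal R_j\}|$ for any $(x,y)\in\mathcal R_h$. *)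

theory Defs
  imports "HOL-Number_Theory.Number_Theory" "HOL-Library.Cardinality"
begin

text \<open>The field F_{q^2} is a finite field type 'a with CARD('a) = q^2.
  Vectors of F_{q^2}^m are represented as functions nat => 'a vanishing at indices >= m.\<close>

definition herm :: "nat \<Rightarrow> nat \<Rightarrow> (nat \<Rightarrow> 'a::field) \<Rightarrow> (nat \<Rightarrow> 'a) \<Rightarrow> 'a" where
  "herm q m x y = (\<Sum>k<m. x k * (y k) ^ q)"

definition vecs :: "nat \<Rightarrow> (nat \<Rightarrow> 'a::zero) set" where
  "vecs m = {x. \<forall>k\<ge>m. x k = 0}"

definition Phi :: "nat \<Rightarrow> nat \<Rightarrow> (nat \<Rightarrow> 'a::{field,finite}) set" where
  "Phi q m = {x \<in> vecs m. x \<noteq> (\<lambda>_. 0) \<and> herm q m x x = 0}"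

definition primitive_elem :: "'a::{field,finite} \<Rightarrow> bool" where
  "primitive_elem \<alpha> \<longleftrightarrow> \<alpha> \<noteq> 0 \<and> (\<forall>y. y \<noteq> 0 \<longrightarrow> (\<exists>l::nat. y = \<alpha> ^ l))"

definition smult_vec :: "'a::times \<Rightarrow> (nat \<Rightarrow> 'a) \<Rightarrow> (nat \<Rightarrow> 'a)" where
  "smult_vec c x = (\<lambda>k. c * x k)"

definition Rel :: "nat \<Rightarrow> 'a::{field,finite} \<Rightarrow> nat \<Rightarrow> nat \<Rightarrow> (nat \<Rightarrow> 'a) \<Rightarrow> (nat \<Rightarrow> 'a) \<Rightarrow> bool" where
  "Rel q \<alpha> n l x y \<longleftrightarrow> x \<in> Phi q n \<and> y \<in> Phi q n \<and>
     (if l \<le> q^2 - 2 then y = smult_vec (\<alpha> ^ l) x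
      else if l \<le> 2*q^2 - 3 then herm q n x y = \<alpha> ^ l
      else if l = 2*q^2 - 2 then herm q n x y = 0 \<and> \<not> (\<exists>c. y = smult_vec c x)
      else False)"

definition pcount :: "nat \<Rightarrow> 'a::{field,finite} \<Rightarrow> nat \<Rightarrow> nat \<Rightarrow> nat \<Rightarrow> (nat \<Rightarrow> 'a) \<Rightarrow> (nat \<Rightarrow> 'a) \<Rightarrow> nat" where
  "pcount q \<alpha> n i j x y = card {z \<in> Phi q n. Rel q \<alpha> n i x z \<and> Rel q \<alpha> n j z y}"

end

theory Submission
  imports Defs "HOL-Computational_Algebra.Polynomial" "HOL-Library.FuncSet"
begin


lemma card_roots_poly_k:
  fixes c d :: "'a::field"
  assumes "k \<ge> 2"
  shows "card {x. x ^ k + c * x - d = 0} \<le> k"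
proof -
  define p where "p = monom (1::'a) k + [:-d, c:]"
  have dg: "degree [:-d, c:] < k" using assms by (auto intro: le_less_trans[OF degree_pCons_le])
  have deg: "degree p = k" unfolding p_def
    by (subst degree_add_eq_left) (use dg in \<open>auto simp: degree_monom_eq\<close>)
  have "p \<noteq> 0" using deg assms by auto
  have "{x. x ^ k + c * x - d = 0} = {x. poly p x = 0}"
    by (auto simp: p_def poly_monom algebra_simps)
  then show ?thesis using card_poly_roots_bound[OF \<open>p \<noteq> 0\<close>] deg by simp
qed

lemma power_card_eq_same:
  fixes x :: "'a::{field,finite}"
  shows   "x ^ card (UNIV :: 'a set) = x"
proof (cases "x = 0")
  case False
  have "x * (\<Prod>y\<in>UNIV-{0}. x * y) = x * x ^ (card (UNIV :: 'a set) - 1) * \<Prod>(UNIV-{0})"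
    by (simp add: prod.distrib mult_ac)
  also have "x * x ^ (card (UNIV :: 'a set) - 1) = x ^ Suc (card (UNIV :: 'a set) - 1)"
    by (subst power_Suc) auto
  also have "Suc (card (UNIV :: 'a set) - 1) = card (UNIV :: 'a set)"
    using finite_UNIV_card_ge_0[where ?'a = 'a] by simp
  also have "(\<Prod>y\<in>UNIV-{0}. x * y) = (\<Prod>y\<in>UNIV-{0}. y)"
    by (rule prod.reindex_bij_witness[of _ "\<lambda>y. y / x" "\<lambda>y. x * y"]) (use False in auto)
  finally show ?thesis
    by simp
qed (use finite_UNIV_card_ge_0[where ?'a = 'a] in auto)

locale uf =
  fixes q :: nat and \<alpha> :: "'a::{field,finite}"
  assumes pp: "primepow q" and cardF: "CARD('a) = q^2" and prim: "primitive_elem \<alpha>"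
begin

definition sg :: "'a \<Rightarrow> 'a" where "sg x = x ^ q"
definition F0 :: "'a set" where "F0 = {x. sg x = x}"
definition tr :: "'a \<Rightarrow> 'a" where "tr x = x + sg x"
definition nm :: "'a \<Rightarrow> 'a" where "nm x = x * sg x"

abbreviation "M \<equiv> q^2 - 1"

lemma q_ge2: "q \<ge> 2"
proof -
  obtain p k where pk: "prime p" "k > 0" "q = p ^ k" using pp primepow_def by blast
  have "p \<ge> 2" using pk prime_ge_2_nat by blast
  moreover have "p ^ 1 \<le> p ^ k" using pk prime_gt_0_nat[of p] by (intro power_increasing) auto
  ultimately show ?thesis using pk by simp
qed

lemma q_pos: "q > 0" using q_ge2 by simp

lemma M_pos: "M > 0"
proof -
  have "q^2 \<ge> 2^2" using q_ge2 power_mono by blast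
  then show ?thesis by simp
qed

lemma M_eq: "M = (q - 1) * (q + 1)"
  by (simp add: power2_eq_square algebra_simps)

lemma char_q: "\<exists>k. q = CHAR('a) ^ k"
proof -
  obtain p k where pk: "prime p" "k > 0" "q = p ^ k" using pp primepow_def by blast
  have cp: "prime CHAR('a)"
    using prime_CHAR_semidom[where 'a='a] finite_imp_CHAR_pos[where 'a='a] by auto
  have "CHAR('a) dvd p ^ (k*2)" using CHAR_dvd_CARD[where 'a='a] cardF pk
    by (simp add: power_mult)
  then have "CHAR('a) dvd p" using cp prime_dvd_power by blast
  then have "CHAR('a) = p" using cp pk primes_dvd_imp_eq by blast
  then show ?thesis using pk by auto
qed

lemma prime_CHAR: "prime CHAR('a)"
  using prime_CHAR_semidom[where 'a='a] finite_imp_CHAR_pos[where 'a='a] by auto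

lemma sg_add: "sg (x + y) = sg x + sg y"
proof -
  obtain k where "q = CHAR('a) ^ k" using char_q by blast
  from freshmans_dream'[OF prime_CHAR this] show ?thesis unfolding sg_def .
qed

lemma sg_sum: "sg (sum f A) = sum (\<lambda>i. sg (f i)) A"
proof -
  obtain k where "q = CHAR('a) ^ k" using char_q by blast
  from freshmans_dream_sum'[OF prime_CHAR this] show ?thesis unfolding sg_def .
qed

lemma sg_mult: "sg (x * y) = sg x * sg y" by (simp add: sg_def power_mult_distrib)
lemma sg_0[simp]: "sg 0 = 0" using q_pos by (simp add: sg_def)
lemma sg_1[simp]: "sg 1 = 1" by (simp add: sg_def)
lemma sg_sg[simp]: "sg (sg x) = x"
  using power_card_eq_same[of x] cardF by (simp add: sg_def power2_eq_square power_mult[symmetric])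
lemma sg_eq_iff[simp]: "sg x = sg y \<longleftrightarrow> x = y" by (metis sg_sg)
lemma sg_eq0_iff[simp]: "sg x = 0 \<longleftrightarrow> x = 0" using sg_eq_iff[of x 0] by simp
lemma sg_neg: "sg (- x) = - sg x"
  using sg_add[of x "-x"] by (simp add: add_eq_0_iff)
lemma sg_diff: "sg (x - y) = sg x - sg y"
  using sg_add[of x "-y"] sg_neg[of y] by simp
lemma sg_inv: "sg (inverse x) = inverse (sg x)" by (simp add: sg_def power_inverse)
lemma sg_div: "sg (x / y) = sg x / sg y" by (simp add: sg_def power_divide)
lemma sg_pow: "sg (x ^ k) = (sg x) ^ k" unfolding sg_def by (simp only: power_mult[symmetric] mult.commute)
lemma bij_sg: "bij sg" by (rule o_bij[of sg]) (auto simp: fun_eq_iff)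

lemma tr_F0: "tr x \<in> F0" by (simp add: tr_def F0_def sg_add add.commute)
lemma nm_F0: "nm x \<in> F0" by (simp add: nm_def F0_def sg_mult mult.commute)
lemma tr_add: "tr (x + y) = tr x + tr y" by (simp add: tr_def sg_add)
lemma nm_0_iff: "nm x = 0 \<longleftrightarrow> x = 0" by (simp add: nm_def)

lemma F0_card_le: "card F0 \<le> q"
proof -
  have "F0 = {x. x ^ q + (-1) * x - 0 = 0}" by (auto simp: F0_def sg_def)
  then show ?thesis using card_roots_poly_k[OF q_ge2, of "-1" 0] by simp
qed

lemma tr_fib_le: "card {x. tr x = d} \<le> q"
proof -
  have "{x. tr x = d} = {x. x ^ q + 1 * x - d = 0}" by (auto simp: tr_def sg_def algebra_simps)
  then show ?thesis using card_roots_poly_k[OF q_ge2, of 1 d] by simp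
qed

lemma nm_fib_le: "card {x. nm x = d} \<le> q + 1"
proof -
  have "{x. nm x = d} = {x. x ^ (q+1) + 0 * x - d = 0}" by (auto simp: nm_def sg_def algebra_simps)
  moreover have "q + 1 \<ge> 2" using q_ge2 by simp
  ultimately show ?thesis using card_roots_poly_k[of "q+1" 0 d] by simp
qed

lemma card_UNIV_a: "card (UNIV::'a set) = q^2" using cardF by simp

lemma sum_fibers:
  fixes f :: "'a \<Rightarrow> 'a"
  assumes "f ` A \<subseteq> B" "finite B" "finite A"
  shows "card A = (\<Sum>d\<in>B. card {x\<in>A. f x = d})"
proof -
  have "A = (\<Union>d\<in>B. {x\<in>A. f x = d})" using assms by auto
  then have "card A = card (\<Union>d\<in>B. {x\<in>A. f x = d})" by simp
  also have "\<dots> = (\<Sum>d\<in>B. card {x\<in>A. f x = d})"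
    by (rule card_UN_disjoint) (use assms in auto)
  finally show ?thesis .
qed

lemma tr_fib_F0: "card F0 = q \<and> (\<forall>d\<in>F0. card {x. tr x = d} = q)"
proof -
  have s: "q^2 = (\<Sum>d\<in>F0. card {x\<in>UNIV. tr x = d})"
    using sum_fibers[of tr UNIV F0] tr_F0 card_UNIV_a by auto
  have le: "(\<Sum>d\<in>F0. card {x\<in>UNIV. tr x = d}) \<le> (\<Sum>d\<in>F0. q)"
    by (rule sum_mono) (use tr_fib_le in auto)
  have "card F0 * q \<ge> q * q" using s le by (simp add: power2_eq_square)
  then have "q \<le> card F0" using q_pos by (simp add: mult_le_cancel2)
  then have c: "card F0 = q" using F0_card_le by simp
  have "\<forall>d\<in>F0. card {x. tr x = d} = q"
  proof (rule ccontr)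
    assume "\<not> ?thesis"
    then obtain d where d: "d \<in> F0" "card {x. tr x = d} \<noteq> q" by auto
    then have "card {x\<in>UNIV. tr x = d} < q" using tr_fib_le[of d] by auto
    then have "(\<Sum>d\<in>F0. card {x\<in>UNIV. tr x = d}) < (\<Sum>d\<in>F0. q)"
      using d tr_fib_le by (intro sum_strict_mono_ex1) auto
    then show False using s c by (simp add: power2_eq_square)
  qed
  then show ?thesis using c by auto
qed

lemma card_F0: "card F0 = q" using tr_fib_F0 by auto
lemma tr_fib: "d \<in> F0 \<Longrightarrow> card {x. tr x = d} = q" using tr_fib_F0 by auto

lemma nm_fib: "d \<in> F0 \<Longrightarrow> d \<noteq> 0 \<Longrightarrow> card {x. nm x = d} = q + 1"
proof -
  have f0: "finite (F0 - {0})" by simp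
  have cF: "card (F0 - {0}) = q - 1" using card_F0 by (simp add: F0_def)
  have s: "card (UNIV - {0::'a}) = (\<Sum>d\<in>F0-{0}. card {x\<in>UNIV-{0}. nm x = d})"
  proof -
    have "nm ` (UNIV - {0}) \<subseteq> F0 - {0}" using nm_F0 nm_0_iff by auto
    then show ?thesis using sum_fibers[of nm "UNIV - {0}" "F0 - {0}"] by auto
  qed
  have ce: "card (UNIV - {0::'a}) = q^2 - 1" using card_UNIV_a by (simp add: card_Diff_singleton)
  have fe: "\<And>d. d \<noteq> 0 \<Longrightarrow> {x\<in>UNIV-{0}. nm x = d} = {x. nm x = d}" using nm_0_iff by auto
  have le: "\<And>d. d \<in> F0 - {0} \<Longrightarrow> card {x\<in>UNIV-{0}. nm x = d} \<le> q + 1"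
    using nm_fib_le fe by auto
  assume d: "d \<in> F0" "d \<noteq> 0"
  show "card {x. nm x = d} = q + 1"
  proof (rule ccontr)
    assume "card {x. nm x = d} \<noteq> q + 1"
    then have "card {x\<in>UNIV-{0}. nm x = d} < q + 1" using nm_fib_le[of d] fe d by auto
    then have "(\<Sum>d\<in>F0-{0}. card {x\<in>UNIV-{0}. nm x = d}) < (\<Sum>d\<in>F0-{0}. q + 1)"
      using d le by (intro sum_strict_mono_ex1) auto
    then have "q^2 - 1 < (q - 1) * (q + 1)" using s ce cF by simp
    then show False using M_eq by simp
  qed
qed

lemma nm_fib0: "{x. nm x = 0} = {0}" using nm_0_iff by auto

lemma F0_0[simp]: "0 \<in> F0" by (simp add: F0_def)
lemma F0_neg: "d \<in> F0 \<Longrightarrow> - d \<in> F0" by (simp add: F0_def sg_neg)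
lemma F0_1[simp]: "1 \<in> F0" by (simp add: F0_def)

end


lemma card_bij_filter:
  assumes "bij_betw f A B"
  shows "card {y\<in>B. P y} = card {x\<in>A. P (f x)}"
proof -
  have "bij_betw f {x\<in>A. P (f x)} {y\<in>B. P y}"
    using assms unfolding bij_betw_def inj_on_def by auto
  then show ?thesis by (simp add: bij_betw_same_card)
qed

lemma card_pairs_sum:
  assumes "finite A" "finite B"
  shows "card {p \<in> A \<times> B. R (fst p) (snd p)} = (\<Sum>b\<in>B. card {a\<in>A. R a b})"
proof -
  have e: "{p \<in> A \<times> B. R (fst p) (snd p)} = (\<Union>b\<in>B. (\<lambda>a. (a, b)) ` {a\<in>A. R a b})" by auto
  have "card (\<Union>b\<in>B. (\<lambda>a. (a, b)) ` {a\<in>A. R a b}) = (\<Sum>b\<in>B. card ((\<lambda>a. (a, b)) ` {a\<in>A. R a b}))"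
    by (rule card_UN_disjoint) (use assms in auto)
  also have "\<dots> = (\<Sum>b\<in>B. card {a\<in>A. R a b})"
    by (rule sum.cong) (auto simp: card_image inj_on_def)
  finally show ?thesis using e by simp
qed

lemma card_triples_sum:
  assumes "finite A" "finite B" "finite C"
  shows "card {t \<in> A \<times> B \<times> C. R t} = (\<Sum>c\<in>C. card {p \<in> A \<times> B. R (fst p, snd p, c)})"
proof -
  have e: "{t \<in> A \<times> B \<times> C. R t} = (\<Union>c\<in>C. (\<lambda>p. (fst p, snd p, c)) ` {p \<in> A \<times> B. R (fst p, snd p, c)})"
    by force
  have "card (\<Union>c\<in>C. (\<lambda>p. (fst p, snd p, c)) ` {p \<in> A \<times> B. R (fst p, snd p, c)})
     = (\<Sum>c\<in>C. card ((\<lambda>p. (fst p, snd p, c)) ` {p \<in> A \<times> B. R (fst p, snd p, c)}))"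
    by (rule card_UN_disjoint) (use assms in auto)
  also have "\<dots> = (\<Sum>c\<in>C. card {p \<in> A \<times> B. R (fst p, snd p, c)})"
    by (rule sum.cong) (auto simp: card_image inj_on_def)
  finally show ?thesis using e by simp
qed

definition vadd :: "(nat \<Rightarrow> 'a::plus) \<Rightarrow> (nat \<Rightarrow> 'a) \<Rightarrow> (nat \<Rightarrow> 'a)" where
  "vadd x y = (\<lambda>k. x k + y k)"
definition vsub :: "(nat \<Rightarrow> 'a::minus) \<Rightarrow> (nat \<Rightarrow> 'a) \<Rightarrow> (nat \<Rightarrow> 'a)" where
  "vsub x y = (\<lambda>k. x k - y k)"
definition ev :: "nat \<Rightarrow> nat \<Rightarrow> 'a::{zero,one}" where
  "ev j = (\<lambda>k. if k = j then 1 else 0)"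

context uf
begin

abbreviation "hm m x y \<equiv> herm q m x y"

lemma herm_alt: "herm q m x y = (\<Sum>k<m. x k * sg (y k))"
  by (simp add: herm_def sg_def)

lemma herm_add_l: "herm q m (vadd x y) z = herm q m x z + herm q m y z" for x :: "nat \<Rightarrow> 'a"
  by (simp add: herm_alt vadd_def sum.distrib distrib_right)
lemma herm_add_r: "herm q m z (vadd x y) = herm q m z x + herm q m z y" for x :: "nat \<Rightarrow> 'a"
  by (simp add: herm_alt vadd_def sum.distrib distrib_left sg_add)
lemma herm_sub_l: "herm q m (vsub x y) z = herm q m x z - herm q m y z" for x :: "nat \<Rightarrow> 'a"
  by (simp add: herm_alt vsub_def sum_subtractf left_diff_distrib)
lemma herm_sub_r: "herm q m z (vsub x y) = herm q m z x - herm q m z y" for x :: "nat \<Rightarrow> 'a"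
  by (simp add: herm_alt vsub_def sum_subtractf right_diff_distrib sg_diff)
lemma herm_smult_l: "herm q m (smult_vec c x) z = c * herm q m x z" for x :: "nat \<Rightarrow> 'a"
  by (simp add: herm_alt smult_vec_def sum_distrib_left mult.assoc)
lemma herm_smult_r: "herm q m z (smult_vec c x) = sg c * herm q m z x"
  by (simp add: herm_alt smult_vec_def sum_distrib_left sg_mult mult.left_commute)
lemma herm_sym: "herm q m y x = sg (herm q m x y)"
  by (simp add: herm_alt sg_sum sg_mult mult.commute)
lemma herm_zero_l[simp]: "herm q m (\<lambda>_. 0) x = 0" for x :: "nat \<Rightarrow> 'a" by (simp add: herm_alt)
lemma herm_zero_r[simp]: "herm q m x (\<lambda>_. 0) = 0" for x :: "nat \<Rightarrow> 'a" by (simp add: herm_alt)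
lemma herm_self_F0: "herm q m x x \<in> F0"
  using herm_sym[of m x x] by (simp add: F0_def)

lemma herm_ev_l: "k < m \<Longrightarrow> herm q m (ev k) x = sg (x k)"
proof -
  assume k: "k < m"
  have "herm q m (ev k) x = (\<Sum>j<m. if j = k then sg (x j) else 0)"
    unfolding herm_alt by (rule sum.cong) (auto simp: ev_def)
  also have "\<dots> = sg (x k)" using k by (simp add: sum.delta)
  finally show ?thesis .
qed

lemma vecs_add: "x \<in> vecs m \<Longrightarrow> y \<in> vecs m \<Longrightarrow> vadd x y \<in> vecs m" for x :: "nat \<Rightarrow> 'a"
  by (simp add: vecs_def vadd_def)
lemma vecs_sub: "x \<in> vecs m \<Longrightarrow> y \<in> vecs m \<Longrightarrow> vsub x y \<in> vecs m" for x :: "nat \<Rightarrow> 'a"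
  by (simp add: vecs_def vsub_def)
lemma vecs_smult: "x \<in> vecs m \<Longrightarrow> smult_vec c x \<in> vecs m" for x :: "nat \<Rightarrow> 'a"
  by (simp add: vecs_def smult_vec_def)
lemma vecs_zero[simp]: "(\<lambda>_. 0::'a) \<in> vecs m" by (simp add: vecs_def)
lemma vecs_ev: "k < m \<Longrightarrow> (ev k :: nat \<Rightarrow> 'a) \<in> vecs m" by (simp add: vecs_def ev_def)

lemma herm_vecs_restrict:
  fixes x :: "nat \<Rightarrow> 'a"
  assumes "x \<in> vecs k" "k \<le> m"
  shows "herm q m x y = herm q k x y"
proof -
  have "herm q m x y = (\<Sum>j<k. x j * sg (y j)) + (\<Sum>j\<in>{k..<m}. x j * sg (y j))"
    unfolding herm_alt using assms(2)
    by (metis (no_types, lifting) atLeast0LessThan le0 sum.atLeastLessThan_concat)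
  also have "(\<Sum>j\<in>{k..<m}. x j * sg (y j)) = 0"
    using assms(1) by (intro sum.neutral) (auto simp: vecs_def)
  finally show ?thesis by (simp add: herm_alt)
qed

lemma vecs_mono: "k \<le> m \<Longrightarrow> (vecs k :: (nat \<Rightarrow> 'a) set) \<subseteq> vecs m"
  by (auto simp: vecs_def)

lemma card_vecs: "finite (vecs m :: (nat \<Rightarrow> 'a) set) \<and> card (vecs m :: (nat \<Rightarrow> 'a) set) = q ^ (2*m)"
proof -
  have b: "bij_betw (\<lambda>x. restrict x {..<m}) (vecs m) (PiE {..<m} (\<lambda>_. (UNIV::'a set)))"
    by (rule bij_betw_byWitness[where f'="\<lambda>f k. if k < m then f k else 0"])
       (auto simp: vecs_def fun_eq_iff PiE_def extensional_def restrict_def)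
  have "card (PiE {..<m} (\<lambda>_. (UNIV::'a set))) = (q^2)^m"
    by (simp add: card_PiE card_UNIV_a)
  moreover have "finite (PiE {..<m} (\<lambda>_. (UNIV::'a set)))" by (simp add: finite_PiE)
  ultimately show ?thesis using b
    by (metis bij_betw_finite bij_betw_same_card power_mult)
qed

lemma vecs_nonzero_ev:
  fixes y :: "nat \<Rightarrow> 'a"
  assumes "y \<in> vecs m" "y \<noteq> (\<lambda>_. 0)"
  shows "\<exists>k<m. y k \<noteq> 0 \<and> herm q m (ev k) y \<noteq> 0"
proof -
  obtain k where k: "y k \<noteq> 0" using assms by auto
  then have "k < m" using assms by (auto simp: vecs_def leI)
  then show ?thesis using k herm_ev_l by auto
qed

definition subsp :: "nat \<Rightarrow> (nat \<Rightarrow> 'a) set \<Rightarrow> bool" where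
  "subsp m W \<longleftrightarrow> W \<subseteq> vecs m \<and> (\<lambda>_. 0) \<in> W \<and> (\<forall>x\<in>W. \<forall>y\<in>W. vadd x y \<in> W)
     \<and> (\<forall>c. \<forall>x\<in>W. smult_vec c x \<in> W)"

lemma subsp_vecs: "subsp m (vecs m)"
  by (auto simp: subsp_def vecs_add vecs_smult)

lemma subsp_sub: "subsp m W \<Longrightarrow> x \<in> W \<Longrightarrow> y \<in> W \<Longrightarrow> vsub x y \<in> W"
proof -
  assume W: "subsp m W" "x \<in> W" "y \<in> W"
  have "vsub x y = vadd x (smult_vec (-1) y)" by (simp add: vsub_def vadd_def smult_vec_def fun_eq_iff)
  then show ?thesis using W by (simp add: subsp_def)
qed

lemma subsp_finite: "subsp m W \<Longrightarrow> finite W"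
  using card_vecs[of m] by (meson finite_subset subsp_def)

end


context uf
begin

lemma alpha_nz: "\<alpha> \<noteq> 0" using prim by (simp add: primitive_elem_def)

lemma pow_suc_cancel: "(a::'a) ^ Suc m = a \<Longrightarrow> a \<noteq> 0 \<Longrightarrow> a ^ m = 1"
proof -
  assume "a ^ Suc m = a" "a \<noteq> 0"
  then have "a * a ^ m = a * 1" by simp
  then show ?thesis using \<open>a \<noteq> 0\<close> by (simp only: mult_cancel_left) simp
qed

lemma alpha_M: "\<alpha> ^ M = 1"
proof -
  have h1: "\<alpha> ^ (q^2) = \<alpha>" using power_card_eq_same[of \<alpha>] cardF by simp
  define m where "m = M"
  have "q^2 = Suc m" using M_pos by (simp add: m_def)
  then have "\<alpha> ^ Suc m = \<alpha>" using h1 by simp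
  then have "\<alpha> ^ m = 1" using alpha_nz pow_suc_cancel by blast
  then show ?thesis by (simp add: m_def)
qed

lemma alpha_pow_mod: "\<alpha> ^ a = \<alpha> ^ (a mod M)"
proof -
  have "\<alpha> ^ a = \<alpha> ^ (M * (a div M)) * \<alpha> ^ (a mod M)"
    by (metis div_mult_mod_eq mult.commute power_add)
  then show ?thesis by (simp only: power_mult alpha_M power_one mult_1)
qed

lemma alpha_pow_nz[simp]: "\<alpha> ^ a \<noteq> 0" using alpha_nz by simp

lemma alpha_inj: "inj_on (\<lambda>l. \<alpha> ^ l) {..<M}"
proof -
  have sub: "UNIV - {0} \<subseteq> (\<lambda>l. \<alpha> ^ l) ` {..<M}"
  proof
    fix y :: 'a assume "y \<in> UNIV - {0}"
    then obtain l :: nat where "y = \<alpha> ^ l" using prim by (auto simp: primitive_elem_def)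
    then have "y = \<alpha> ^ (l mod M)" using alpha_pow_mod by simp
    moreover have "l mod M < M" using M_pos by simp
    ultimately show "y \<in> (\<lambda>l. \<alpha> ^ l) ` {..<M}" by auto
  qed
  have "card (UNIV - {0::'a}) = M" using card_UNIV_a by (simp add: card_Diff_singleton)
  then have "card {..<M} \<le> card ((\<lambda>l. \<alpha> ^ l) ` {..<M})"
    using card_mono[OF _ sub] by simp
  then have "card ((\<lambda>l. \<alpha> ^ l) ` {..<M}) = card {..<M}"
    using card_image_le[of "{..<M}" "\<lambda>l. \<alpha> ^ l"] by simp
  then show ?thesis by (simp add: eq_card_imp_inj_on)
qed

lemma alpha_pow_eq_iff: "\<alpha> ^ a = \<alpha> ^ b \<longleftrightarrow> a mod M = b mod M"
proof
  assume "\<alpha> ^ a = \<alpha> ^ b"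
  then have "\<alpha> ^ (a mod M) = \<alpha> ^ (b mod M)" using alpha_pow_mod by metis
  then show "a mod M = b mod M" using alpha_inj M_pos unfolding inj_on_def by simp
next
  assume "a mod M = b mod M"
  then show "\<alpha> ^ a = \<alpha> ^ b" using alpha_pow_mod by metis
qed

lemma alpha_pow_cong: "\<alpha> ^ a = \<alpha> ^ b \<longleftrightarrow> [a = b] (mod M)"
  by (simp add: alpha_pow_eq_iff cong_def)

lemma alpha_surj: "y \<noteq> 0 \<Longrightarrow> \<exists>l. y = \<alpha> ^ l"
  using prim by (auto simp: primitive_elem_def)

definition tt :: nat where "tt = (if even q then 0 else (q + 1) div 2)"

lemma minus_one_alpha: "- 1 = \<alpha> ^ (tt * (q - 1))"
proof (cases "even q")
  case True
  obtain k where k: "q = CHAR('a) ^ k" using char_q by blast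
  have "k \<noteq> 0" using k q_ge2 by (cases k) auto
  then have "2 dvd CHAR('a)" using True k prime_CHAR
    by (metis prime_dvd_power_iff prime_nat_iff two_is_prime_nat dvd_refl gr0I) 
  then have "CHAR('a) = 2" using primes_dvd_imp_eq[OF two_is_prime_nat prime_CHAR] by simp
  then have "- (1::'a) = 1" using uminus_CHAR_2 by blast
  then show ?thesis using True by (simp add: tt_def)
next
  case False
  have e: "tt * (q - 1) * 2 = M" using False M_eq
    by (auto simp: tt_def elim!: oddE simp: algebra_simps)
  define z where "z = \<alpha> ^ (tt * (q - 1))"
  have "z ^ 2 = 1" using e alpha_M by (simp add: z_def power_mult[symmetric])
  moreover have "z \<noteq> 1"
  proof
    assume "z = 1"
    then have "\<alpha> ^ (tt * (q - 1)) = \<alpha> ^ 0" by (simp add: z_def)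
    then have "(tt * (q - 1)) mod M = 0 mod M" using alpha_pow_eq_iff[of "tt*(q-1)" 0] by blast
    then have "(tt * (q - 1)) mod M = 0" by simp
    moreover have "0 < tt * (q - 1)" "tt * (q - 1) < M" using e M_pos by linarith+
    ultimately show False by simp
  qed
  ultimately have "z = -1" by (simp add: power2_eq_1_iff)
  then show ?thesis by (simp add: z_def)
qed

lemma tr_zero_iff: "x \<noteq> 0 \<Longrightarrow> tr x = 0 \<longleftrightarrow> x ^ (q - 1) = - 1"
proof -
  assume x: "x \<noteq> 0"
  have "sg x = x ^ Suc (q - 1)" using q_pos by (simp add: sg_def)
  then have "sg x = x * x ^ (q - 1)" by (simp only: power_Suc)
  then have "tr x = x * (1 + x ^ (q - 1))" by (simp add: tr_def distrib_left)
  then have "tr x = 0 \<longleftrightarrow> 1 + x ^ (q - 1) = 0" using x by simp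
  also have "\<dots> \<longleftrightarrow> x ^ (q - 1) = - 1" by (simp only: add_eq_0_iff)
  finally show ?thesis .
qed

lemma tr_alpha_div_zero_iff:
  "tr (\<alpha> ^ a / \<alpha> ^ b) = 0 \<longleftrightarrow> [a = b + tt] (mod (q + 1))"
proof -
  have m1: "uminus (\<alpha> ^ (b * (q - 1))) = \<alpha> ^ ((b + tt) * (q - 1))"
  proof -
    have "\<alpha> ^ ((b + tt) * (q - 1)) = \<alpha> ^ (b * (q - 1)) * \<alpha> ^ (tt * (q - 1))"
      by (simp only: power_add distrib_right)
    also have "\<dots> = \<alpha> ^ (b * (q - 1)) * (- 1)" by (simp only: minus_one_alpha[symmetric])
    finally show ?thesis by simp
  qed
  have "tr (\<alpha> ^ a / \<alpha> ^ b) = 0 \<longleftrightarrow> (\<alpha> ^ a / \<alpha> ^ b) ^ (q - 1) = - 1"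
    by (rule tr_zero_iff) (simp add: alpha_nz)
  also have "\<dots> \<longleftrightarrow> \<alpha> ^ (a * (q - 1)) / \<alpha> ^ (b * (q - 1)) = - 1"
    by (simp only: power_divide power_mult[symmetric])
  also have "\<dots> \<longleftrightarrow> \<alpha> ^ (a * (q - 1)) = uminus (\<alpha> ^ (b * (q - 1)))"
    using alpha_nz by (auto simp: field_simps)
  also have "\<dots> \<longleftrightarrow> \<alpha> ^ (a * (q - 1)) = \<alpha> ^ ((b + tt) * (q - 1))"
    by (simp only: m1)
  also have "\<dots> \<longleftrightarrow> (a * (q - 1)) mod ((q + 1) * (q - 1)) = ((b + tt) * (q - 1)) mod ((q + 1) * (q - 1))"
  proof -
    have M': "q^2 - 1 = (q + 1) * (q - 1)" using M_eq by (simp add: mult.commute)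
    show ?thesis unfolding alpha_pow_eq_iff M' ..
  qed
  also have "\<dots> \<longleftrightarrow> (a mod (q + 1)) * (q - 1) = ((b + tt) mod (q + 1)) * (q - 1)"
    by (simp only: mod_mult_mult2)
  also have "\<dots> \<longleftrightarrow> a mod (q + 1) = (b + tt) mod (q + 1)"
    using q_ge2 by (simp only: mult_right_cancel)
  finally show ?thesis by (simp add: cong_def)
qed

end


definition phi :: "(nat \<Rightarrow> 'a::field) \<Rightarrow> (nat \<Rightarrow> 'a) \<Rightarrow> 'a \<Rightarrow> 'a \<Rightarrow> (nat \<Rightarrow> 'a) \<Rightarrow> (nat \<Rightarrow> 'a)" where
  "phi u v a b w = vadd (vadd (smult_vec a u) (smult_vec b v)) w"

context uf
begin

lemma tr_fib_bij:
  assumes "bij (f :: 'a \<Rightarrow> 'a)" "d \<in> F0"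
  shows "card {b. tr (f b) = d} = q"
proof -
  have "card {y\<in>UNIV. tr y = d} = card {x\<in>UNIV. tr (f x) = d}"
    by (rule card_bij_filter) (use assms in simp)
  then show ?thesis using tr_fib[OF assms(2)] by simp
qed

lemma bij_mult_sg: "c \<noteq> 0 \<Longrightarrow> bij (\<lambda>b. c * sg b)"
  by (rule bij_betw_byWitness[where f'="\<lambda>y. sg (y / c)"]) (auto simp: sg_div sg_mult)

lemma bij_mult_r: "c \<noteq> 0 \<Longrightarrow> bij (\<lambda>a::'a. a * c)"
  by (rule bij_betw_byWitness[where f'="\<lambda>y. y / c"]) auto

lemma tr_fib_mult_sg: "c \<noteq> 0 \<Longrightarrow> d \<in> F0 \<Longrightarrow> card {b. tr (c * sg b) = d} = q"
  using tr_fib_bij[OF bij_mult_sg] by blast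

lemma card_pairs_tr:
  assumes d: "d \<in> F0"
  shows "card {p \<in> (UNIV::'a set) \<times> (UNIV::'a set). tr (fst p * sg (snd p)) = d}
         = (if d = 0 then q^2 else 0) + M * q"
proof -
  have "card {p \<in> (UNIV::'a set) \<times> (UNIV::'a set). tr (fst p * sg (snd p)) = d}
      = (\<Sum>b\<in>UNIV. card {a\<in>UNIV. tr (a * sg b) = d})"
    by (rule card_pairs_sum) auto
  also have "\<dots> = card {a\<in>UNIV. tr (a * sg 0) = d} + (\<Sum>b\<in>UNIV-{0}. card {a\<in>UNIV. tr (a * sg b) = d})"
    by (simp add: sum.remove[of UNIV 0])
  also have "card {a\<in>UNIV. tr (a * sg 0) = d} = (if d = 0 then q^2 else 0)"
    using card_UNIV_a by (auto simp: tr_def)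
  also have "(\<Sum>b\<in>UNIV-{0}. card {a\<in>UNIV. tr (a * sg b) = d}) = (\<Sum>b\<in>UNIV-{0::'a}. q)"
  proof (rule sum.cong)
    fix b :: 'a assume "b \<in> UNIV - {0}"
    then have "card {a. tr (a * sg b) = d} = q"
      using tr_fib_bij[OF bij_mult_r d] by simp
    then show "card {a\<in>UNIV. tr (a * sg b) = d} = q" by simp
  qed simp
  also have "\<dots> = M * q" using card_UNIV_a by (simp add: card_Diff_singleton)
  finally show ?thesis .
qed

section \<open>Hyperbolic splitting\<close>

lemma herm_phi_l: "herm q m (phi u v a b w) z = a * herm q m u z + b * herm q m v z + herm q m w z"
  for u :: "nat \<Rightarrow> 'a"
  by (simp add: phi_def herm_add_l herm_smult_l)

lemma herm_phi_r: "herm q m z (phi u v a b w) = sg a * herm q m z u + sg b * herm q m z v + herm q m z w"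
  for u :: "nat \<Rightarrow> 'a"
  by (simp add: phi_def herm_add_r herm_smult_r)

end

locale hsplit = uf q \<alpha> for q and \<alpha> :: "'a::{field,finite}" +
  fixes m :: nat and W :: "(nat \<Rightarrow> 'a) set" and u v :: "nat \<Rightarrow> 'a"
  assumes W: "subsp m W" and uW: "u \<in> W" and vW: "v \<in> W"
    and Qu: "herm q m u u = 0" and Qv: "herm q m v v = 0" and uv: "herm q m u v = 1"
begin

definition W' where "W' = {w\<in>W. herm q m w u = 0 \<and> herm q m w v = 0}"

lemma vu: "herm q m v u = 1" using herm_sym[of m v u] uv by simp

lemma W'W: "W' \<subseteq> W" by (auto simp: W'_def)

lemma uw: "w \<in> W' \<Longrightarrow> herm q m u w = 0" using herm_sym[of m u w] by (simp add: W'_def)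
lemma vw: "w \<in> W' \<Longrightarrow> herm q m v w = 0" using herm_sym[of m v w] by (simp add: W'_def)

lemma phi_v: "w \<in> W' \<Longrightarrow> herm q m (phi u v a b w) v = a"
  by (simp add: herm_phi_l uv Qv W'_def)
lemma phi_u: "w \<in> W' \<Longrightarrow> herm q m (phi u v a b w) u = b"
  by (simp add: herm_phi_l vu Qu W'_def)

lemma phi_Q: "w \<in> W' \<Longrightarrow> herm q m (phi u v a b w) (phi u v a b w) = tr (a * sg b) + herm q m w w"
proof -
  assume w: "w \<in> W'"
  have "herm q m (phi u v a b w) (phi u v a b w)
      = a * herm q m u (phi u v a b w) + b * herm q m v (phi u v a b w) + herm q m w (phi u v a b w)"
    by (rule herm_phi_l)
  also have "herm q m u (phi u v a b w) = sg b"
    using w by (simp add: herm_phi_r Qu uv uw)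
  also have "herm q m v (phi u v a b w) = sg a"
    using w by (simp add: herm_phi_r Qv vu vw)
  also have "herm q m w (phi u v a b w) = herm q m w w"
    using w by (simp add: herm_phi_r W'_def)
  finally show ?thesis by (simp add: tr_def sg_mult mult.commute)
qed

lemma phi_W: "w \<in> W \<Longrightarrow> phi u v a b w \<in> W"
  using W uW vW by (simp add: phi_def subsp_def)

lemma subsp_W': "subsp m W'"
proof -
  have "\<And>x y. x \<in> W' \<Longrightarrow> y \<in> W' \<Longrightarrow> vadd x y \<in> W'"
    using W by (auto simp: W'_def subsp_def herm_add_l)
  moreover have "\<And>c x. x \<in> W' \<Longrightarrow> smult_vec c x \<in> W'"
    using W by (auto simp: W'_def subsp_def herm_smult_l)
  moreover have "(\<lambda>_. 0) \<in> W'" using W by (simp add: W'_def subsp_def)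
  moreover have "W' \<subseteq> vecs m" using W W'W by (auto simp: subsp_def)
  ultimately show ?thesis by (simp add: subsp_def)
qed

definition psi where
  "psi z = (herm q m z v, herm q m z u, vsub (vsub z (smult_vec (herm q m z v) u)) (smult_vec (herm q m z u) v))"

lemma psi_W': "z \<in> W \<Longrightarrow> snd (snd (psi z)) \<in> W'"
proof -
  assume z: "z \<in> W"
  let ?w = "vsub (vsub z (smult_vec (herm q m z v) u)) (smult_vec (herm q m z u) v)"
  have s1: "smult_vec (herm q m z v) u \<in> W" using W uW by (simp add: subsp_def)
  have s2: "smult_vec (herm q m z u) v \<in> W" using W vW by (simp add: subsp_def)
  have "?w \<in> W" by (rule subsp_sub[OF W subsp_sub[OF W z s1] s2])
  moreover have "herm q m ?w u = 0" by (simp add: herm_sub_l herm_smult_l Qu vu)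
  moreover have "herm q m ?w v = 0" by (simp add: herm_sub_l herm_smult_l Qv uv)
  ultimately show ?thesis by (simp add: psi_def W'_def)
qed

lemma split_bij: "bij_betw (\<lambda>(a, b, w). phi u v a b w) (UNIV \<times> UNIV \<times> W') W"
proof (rule bij_betw_byWitness[where f'=psi])
  show "\<forall>t\<in>UNIV \<times> UNIV \<times> W'. psi ((\<lambda>(a, b, w). phi u v a b w) t) = t"
  proof
    fix t assume t: "t \<in> (UNIV::'a set) \<times> (UNIV::'a set) \<times> W'"
    obtain a b w where abw: "t = (a, b, w)" by (cases t) auto
    then have w: "w \<in> W'" using t by simp
    have "vsub (vsub (phi u v a b w) (smult_vec a u)) (smult_vec b v) = w"
      by (simp add: phi_def vsub_def vadd_def smult_vec_def fun_eq_iff)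
    then show "psi ((\<lambda>(a, b, w). phi u v a b w) t) = t"
      using w abw by (simp add: psi_def phi_v phi_u)
  qed
  show "\<forall>z\<in>W. (\<lambda>(a, b, w). phi u v a b w) (psi z) = z"
    by (simp add: psi_def phi_def vsub_def vadd_def smult_vec_def fun_eq_iff)
  show "(\<lambda>(a, b, w). phi u v a b w) ` (UNIV \<times> UNIV \<times> W') \<subseteq> W"
    using phi_W W'W by auto
  show "psi ` W \<subseteq> UNIV \<times> UNIV \<times> W'"
  proof
    fix t assume "t \<in> psi ` W"
    then obtain z where "z \<in> W" "t = psi z" by auto
    then show "t \<in> UNIV \<times> UNIV \<times> W'" using psi_W'[of z] by (cases "psi z") auto
  qed
qed

lemma finite_W: "finite W" using W subsp_finite by blast
lemma finite_W': "finite W'" using finite_W W'W finite_subset by blast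

lemma card_W: "card W = q^4 * card W'"
proof -
  have "card W = card ((UNIV::'a set) \<times> (UNIV::'a set) \<times> W')"
    using split_bij by (simp add: bij_betw_same_card)
  also have "\<dots> = q^2 * (q^2 * card W')" by (simp add: card_cartesian_product card_UNIV_a)
  finally show ?thesis by (simp add: power_add[symmetric])
qed

lemma card_filter_split:
  "card {z\<in>W. P z} = card {t \<in> (UNIV::'a set) \<times> (UNIV::'a set) \<times> W'. P (phi u v (fst t) (fst (snd t)) (snd (snd t)))}"
proof -
  have "card {z\<in>W. P z} = card {t \<in> (UNIV::'a set) \<times> (UNIV::'a set) \<times> W'. P ((\<lambda>(a, b, w). phi u v a b w) t)}"
    by (rule card_bij_filter[OF split_bij])
  also have "{t \<in> (UNIV::'a set) \<times> (UNIV::'a set) \<times> W'. P ((\<lambda>(a, b, w). phi u v a b w) t)}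
     = {t \<in> (UNIV::'a set) \<times> (UNIV::'a set) \<times> W'. P (phi u v (fst t) (fst (snd t)) (snd (snd t)))}"
    by (auto simp: case_prod_beta)
  finally show ?thesis .
qed

lemma count_Q:
  assumes c: "c \<in> F0"
  shows "card {z\<in>W. herm q m z z = c} = M * q * card W' + q^2 * card {w\<in>W'. herm q m w w = c}"
proof -
  have "card {z\<in>W. herm q m z z = c}
     = card {t \<in> (UNIV::'a set) \<times> (UNIV::'a set) \<times> W'. tr (fst t * sg (fst (snd t))) + herm q m (snd (snd t)) (snd (snd t)) = c}"
    unfolding card_filter_split by (rule arg_cong[where f=card]) (auto simp: phi_Q)
  also have "\<dots> = (\<Sum>w\<in>W'. card {p \<in> (UNIV::'a set) \<times> (UNIV::'a set). tr (fst p * sg (snd p)) + herm q m w w = c})"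
    by (subst card_triples_sum) (auto simp: finite_W')
  also have "\<dots> = (\<Sum>w\<in>W'. (if herm q m w w = c then q^2 else 0) + M * q)"
  proof (rule sum.cong)
    fix w assume "w \<in> W'"
    have d: "c - herm q m w w \<in> F0" using c herm_self_F0[of m w] by (simp add: F0_def sg_diff)
    have "{p \<in> (UNIV::'a set) \<times> (UNIV::'a set). tr (fst p * sg (snd p)) + herm q m w w = c}
        = {p \<in> (UNIV::'a set) \<times> (UNIV::'a set). tr (fst p * sg (snd p)) = c - herm q m w w}"
      by (auto simp: algebra_simps)
    then show "card {p \<in> (UNIV::'a set) \<times> (UNIV::'a set). tr (fst p * sg (snd p)) + herm q m w w = c}
        = (if herm q m w w = c then q^2 else 0) + M * q"
      using card_pairs_tr[OF d] by simp
  qed simp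
  also have "\<dots> = (\<Sum>w\<in>W'. (if herm q m w w = c then q^2 else 0)) + M * q * card W'"
    by (simp add: sum.distrib)
  also have "(\<Sum>w\<in>W'. (if herm q m w w = c then q^2 else 0)) = q^2 * card {w\<in>W'. herm q m w w = c}"
    using finite_W' by (simp add: sum.If_cases Int_def)
  finally show ?thesis by simp
qed

end


lemma sum_fibers_gen:
  assumes "f ` A \<subseteq> B" "finite B" "finite A"
  shows "card A = (\<Sum>d\<in>B. card {x\<in>A. f x = d})"
proof -
  have "A = (\<Union>d\<in>B. {x\<in>A. f x = d})" using assms by auto
  then have "card A = card (\<Union>d\<in>B. {x\<in>A. f x = d})" by simp
  also have "\<dots> = (\<Sum>d\<in>B. card {x\<in>A. f x = d})"
    by (rule card_UN_disjoint) (use assms in auto)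
  finally show ?thesis .
qed

lemma card_pairs_fst_fixed:
  assumes "a0 \<in> A"
  shows "card {p \<in> A \<times> B. fst p = a0 \<and> R (snd p)} = card {b\<in>B. R b}"
proof -
  have "{p \<in> A \<times> B. fst p = a0 \<and> R (snd p)} = (\<lambda>b. (a0, b)) ` {b\<in>B. R b}"
    using assms by force
  moreover have "inj_on (\<lambda>b. (a0, b)) {b\<in>B. R b}" by (auto simp: inj_on_def)
  ultimately show ?thesis by (simp add: card_image)
qed

context uf
begin

lemma exists_tr: "d \<in> F0 \<Longrightarrow> \<exists>x. tr x = d"
proof (rule ccontr)
  assume "d \<in> F0" "\<not> (\<exists>x. tr x = d)"
  then have "card {x. tr x = d} = 0" by simp
  then show False using tr_fib[OF \<open>d \<in> F0\<close>] q_pos by simp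
qed

lemma exists_nm: "d \<in> F0 \<Longrightarrow> d \<noteq> 0 \<Longrightarrow> \<exists>x. nm x = d"
proof (rule ccontr)
  assume "d \<in> F0" "d \<noteq> 0" "\<not> (\<exists>x. nm x = d)"
  then have "card {x. nm x = d} = 0" by simp
  then show False using nm_fib[OF \<open>d \<in> F0\<close> \<open>d \<noteq> 0\<close>] by simp
qed

lemma partner:
  fixes x z :: "nat \<Rightarrow> 'a"
  assumes W: "subsp m W" and xW: "x \<in> W" and Qx: "herm q m x x = 0" and zW: "z \<in> W"
    and zx: "herm q m z x \<noteq> 0"
  shows "\<exists>u\<in>W. herm q m u u = 0 \<and> herm q m u x = 1 \<and>
           (\<forall>y. herm q m z y = 0 \<longrightarrow> herm q m x y = 0 \<longrightarrow> herm q m u y = 0)"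
proof -
  define c where "c = herm q m z x"
  define u0 where "u0 = smult_vec (1 / c) z"
  have u0x: "herm q m u0 x = 1" using zx by (simp add: u0_def herm_smult_l c_def)
  have xu0: "herm q m x u0 = 1" using herm_sym[of m x u0] u0x by simp
  have "- herm q m u0 u0 \<in> F0" using herm_self_F0 F0_neg by blast
  then obtain \<delta> where d: "tr \<delta> = - herm q m u0 u0" using exists_tr by blast
  define u where "u = vadd u0 (smult_vec \<delta> x)"
  have uW: "u \<in> W" using W zW xW by (simp add: u_def u0_def subsp_def)
  have "herm q m u u = herm q m u0 u0 + tr \<delta>"
    by (simp add: u_def herm_add_l herm_add_r herm_smult_l herm_smult_r u0x xu0 Qx tr_def algebra_simps)
  then have Qu: "herm q m u u = 0" using d by simp
  have ux: "herm q m u x = 1" using u0x Qx by (simp add: u_def herm_add_l herm_smult_l)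
  have "\<forall>y. herm q m z y = 0 \<longrightarrow> herm q m x y = 0 \<longrightarrow> herm q m u y = 0"
    by (simp add: u_def u0_def herm_add_l herm_smult_l)
  then show ?thesis using uW Qu ux by blast
qed

lemma fiber_functional:
  fixes y w0 :: "nat \<Rightarrow> 'a"
  assumes W: "subsp m W" and w0: "w0 \<in> W" "herm q m w0 y \<noteq> 0"
  shows "q^2 * card {w\<in>W. herm q m w y = e} = card W"
proof -
  have fW: "finite W" using W subsp_finite by blast
  define w1 where "w1 = smult_vec (1 / herm q m w0 y) w0"
  have w1W: "w1 \<in> W" using W w0 by (simp add: w1_def subsp_def)
  have w1y: "herm q m w1 y = 1" using w0 by (simp add: w1_def herm_smult_l)
  have eq: "card {w\<in>W. herm q m w y = d} = card {w\<in>W. herm q m w y = 0}" for d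
  proof -
    have "bij_betw (\<lambda>w. vadd w (smult_vec d w1)) {w\<in>W. herm q m w y = 0} {w\<in>W. herm q m w y = d}"
    proof (rule bij_betw_byWitness[where f'="\<lambda>w. vsub w (smult_vec d w1)"])
      show "\<forall>a\<in>{w \<in> W. hm m w y = 0}. vsub (vadd a (smult_vec d w1)) (smult_vec d w1) = a"
        by (simp add: vsub_def vadd_def fun_eq_iff)
      show "\<forall>a'\<in>{w \<in> W. hm m w y = d}. vadd (vsub a' (smult_vec d w1)) (smult_vec d w1) = a'"
        by (simp add: vsub_def vadd_def fun_eq_iff)
      show "(\<lambda>w. vadd w (smult_vec d w1)) ` {w \<in> W. hm m w y = 0} \<subseteq> {w \<in> W. hm m w y = d}"
        using W w1W w1y by (auto simp: subsp_def herm_add_l herm_smult_l)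
      have "\<And>w. w \<in> W \<Longrightarrow> vsub w (smult_vec d w1) \<in> W"
        using W w1W by (metis subsp_def subsp_sub)
      then show "(\<lambda>w. vsub w (smult_vec d w1)) ` {w \<in> W. hm m w y = d} \<subseteq> {w \<in> W. hm m w y = 0}"
        using w1y by (auto simp: herm_sub_l herm_smult_l)
    qed
    then show ?thesis by (simp add: bij_betw_same_card)
  qed
  have "card W = (\<Sum>d\<in>(UNIV::'a set). card {w\<in>W. herm q m w y = d})"
    by (rule sum_fibers_gen) (use fW in auto)
  also have "\<dots> = (\<Sum>d\<in>(UNIV::'a set). card {w\<in>W. herm q m w y = 0})"
    by (rule sum.cong[OF refl]) (rule eq)
  also have "\<dots> = q^2 * card {w\<in>W. herm q m w y = 0}" using card_UNIV_a by simp
  finally show ?thesis using eq by simp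
qed

end

context hsplit
begin

lemma count_C:
  assumes wy: "wy \<in> W'"
  shows "card {z\<in>W. herm q m z z = 0 \<and> herm q m z v = a0 \<and> herm q m z wy = e}
       = (if a0 = 0 then q^2 * card {w\<in>W'. herm q m w w = 0 \<and> herm q m w wy = e}
          else q * card {w\<in>W'. herm q m w wy = e})"
proof -
  have hw: "w \<in> W' \<Longrightarrow> herm q m (phi u v a b w) wy = herm q m w wy" for a b w
    using wy by (simp add: herm_phi_l uw vw)
  have "card {z\<in>W. herm q m z z = 0 \<and> herm q m z v = a0 \<and> herm q m z wy = e}
     = card {t \<in> (UNIV::'a set) \<times> (UNIV::'a set) \<times> W'. fst t = a0 \<and>
          tr (fst t * sg (fst (snd t))) + herm q m (snd (snd t)) (snd (snd t)) = 0 \<and> herm q m (snd (snd t)) wy = e}"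
    unfolding card_filter_split by (rule arg_cong[where f=card]) (auto simp: phi_Q phi_v hw)
  also have "\<dots> = (\<Sum>w\<in>W'. card {p \<in> (UNIV::'a set) \<times> (UNIV::'a set). fst p = a0 \<and>
          (tr (a0 * sg (snd p)) + herm q m w w = 0 \<and> herm q m w wy = e)})"
    by (subst card_triples_sum) (auto simp: finite_W' intro!: sum.cong arg_cong[where f=card])
  also have "\<dots> = (\<Sum>w\<in>W'. card {b. tr (a0 * sg b) + herm q m w w = 0 \<and> herm q m w wy = e})"
    by (subst card_pairs_fst_fixed) auto
  also have "\<dots> = (\<Sum>w\<in>W'. if herm q m w wy = e then
                     (if a0 = 0 then (if herm q m w w = 0 then q^2 else 0) else q) else 0)"
  proof (rule sum.cong)
    fix w assume "w \<in> W'"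
    have d: "- herm q m w w \<in> F0" using herm_self_F0 F0_neg by blast
    show "card {b. tr (a0 * sg b) + herm q m w w = 0 \<and> herm q m w wy = e}
        = (if herm q m w wy = e then (if a0 = 0 then (if herm q m w w = 0 then q^2 else 0) else q) else 0)"
    proof (cases "herm q m w wy = e")
      case True
      show ?thesis
      proof (cases "a0 = 0")
        case True
        have "{b. tr (a0 * sg b) + herm q m w w = 0 \<and> herm q m w wy = e} = (if herm q m w w = 0 then UNIV else {})"
          using \<open>herm q m w wy = e\<close> True by (auto simp: tr_def)
        then show ?thesis using \<open>herm q m w wy = e\<close> True card_UNIV_a by simp
      next
        case False
        have "{b. tr (a0 * sg b) + herm q m w w = 0 \<and> herm q m w wy = e} = {b. tr (a0 * sg b) = - herm q m w w}"
          using True by (auto simp: add_eq_0_iff2)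
        then show ?thesis using tr_fib_mult_sg[OF False d] True False by simp
      qed
    qed simp
  qed simp
  also have "\<dots> = (if a0 = 0 then q^2 * card {w\<in>W'. herm q m w w = 0 \<and> herm q m w wy = e}
          else q * card {w\<in>W'. herm q m w wy = e})"
  proof (cases "a0 = 0")
    case True
    have "(\<Sum>w\<in>W'. if herm q m w wy = e then (if herm q m w w = 0 then q^2 else 0) else (0::nat))
        = (\<Sum>w\<in>{w\<in>W'. herm q m w w = 0 \<and> herm q m w wy = e}. q^2)"
      using finite_W' by (intro sum.mono_neutral_cong_right) auto
    moreover have "(\<Sum>w\<in>W'. if herm q m w wy = e then (if a0 = 0 then (if herm q m w w = 0 then q^2 else 0) else q) else 0)
       = (\<Sum>w\<in>W'. if herm q m w wy = e then (if herm q m w w = 0 then q^2 else 0) else (0::nat))"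
      by (rule sum.cong[OF refl]) (simp add: True)
    ultimately show ?thesis using True by (simp add: mult.commute)
  next
    case False
    have "(\<Sum>w\<in>W'. if herm q m w wy = e then q else (0::nat))
        = (\<Sum>w\<in>{w\<in>W'. herm q m w wy = e}. q)"
      using finite_W' by (intro sum.mono_neutral_cong_right) auto
    moreover have "(\<Sum>w\<in>W'. if herm q m w wy = e then (if a0 = 0 then (if herm q m w w = 0 then q^2 else 0) else q) else 0)
       = (\<Sum>w\<in>W'. if herm q m w wy = e then q else (0::nat))"
      by (rule sum.cong[OF refl]) (simp add: False)
    ultimately show ?thesis using False by (simp add: mult.commute)
  qed
  finally show ?thesis .
qed

lemma zero_W': "(\<lambda>_. 0) \<in> W'"
  using subsp_W' by (simp add: subsp_def)

lemma count_N1: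
  "card {z\<in>W. herm q m z z = 0 \<and> herm q m z v = a0}
       = (if a0 = 0 then q^2 * card {w\<in>W'. herm q m w w = 0} else q * card W')"
  using count_C[OF zero_W', of a0 0] by simp

end


lemma aux_id: "(Q^2 - 1) * Q * (Q * A) + Q^2 * (A - s * B) = Q^4 * A - s * (Q^2 * B)" for Q A B s :: int
  by (simp add: algebra_simps power2_eq_square power4_eq_xxxx)

context uf
begin

fun G :: "nat \<Rightarrow> 'a \<Rightarrow> nat" where
  "G 0 c = (if c = 0 then 1 else 0)"
| "G (Suc 0) c = (if c = 0 then 1 else if c \<in> F0 then q + 1 else 0)"
| "G (Suc (Suc k)) c = (if c \<in> F0 then M * q * q^(2*k) + q^2 * G k c else 0)"

lemma G_notF0: "c \<notin> F0 \<Longrightarrow> G k c = 0"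
  by (induction k c rule: G.induct) (auto simp: F0_def)

lemma herm_ev_r: "k < m \<Longrightarrow> herm q m x (ev k) = x k" for x :: "nat \<Rightarrow> 'a"
  using herm_sym[of m x "ev k"] herm_ev_l[of k m x] by simp

lemma herm_ev_ev: "i < m \<Longrightarrow> j < m \<Longrightarrow> herm q m (ev i :: nat \<Rightarrow> 'a) (ev j) = (if i = j then 1 else 0)"
  using herm_ev_r[of j m "ev i"] by (simp add: ev_def)

lemma vecs0: "vecs 0 = {(\<lambda>_. 0::'a)}" by (auto simp: vecs_def)

lemma count_vecs: "card {z \<in> (vecs m :: (nat \<Rightarrow> 'a) set). herm q m z z = c} = G m c"
proof (induction m arbitrary: c rule: less_induct)
  case (less m)
  show ?case
  proof (cases m)
    case 0
    then show ?thesis by (simp add: vecs0 herm_def)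
  next
    case (Suc j)
    show ?thesis
    proof (cases j)
      case 0
      have b: "bij_betw (\<lambda>a. (\<lambda>k. if k = 0 then a else 0)) (UNIV::'a set) (vecs 1)"
        by (rule bij_betw_byWitness[where f'="\<lambda>z. z 0"]) (auto simp: vecs_def fun_eq_iff)
      have "card {z \<in> (vecs 1 :: (nat \<Rightarrow> 'a) set). herm q 1 z z = c} = card {a\<in>UNIV. nm a = c}"
        using card_bij_filter[OF b, of "\<lambda>z. herm q 1 z z = c"] by (simp add: herm_alt nm_def)
      also have "\<dots> = G 1 c"
      proof -
        consider "c = 0" | "c \<in> F0" "c \<noteq> 0" | "c \<notin> F0" by blast
        then show ?thesis
        proof cases
          case 1 then show ?thesis using nm_fib0 by simp
        next
          case 2 then show ?thesis using nm_fib by simp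
        next
          case 3
          then have "{a\<in>UNIV. nm a = c} = {}" using nm_F0 by auto
          moreover have "c \<noteq> 0" using 3 F0_0 by blast
          ultimately show ?thesis using 3 by (simp add: G_notF0)
        qed
      qed
      finally show ?thesis using Suc 0 by simp
    next
      case (Suc k)
      have m: "m = k + 2" using \<open>m = Suc j\<close> Suc by simp
      have "- 1 \<in> F0" by (simp add: F0_neg)
      then obtain \<beta> where beta: "nm \<beta> = - 1" using exists_nm by fastforce
      then have bnz: "\<beta> \<noteq> 0" by (auto simp: nm_def)
      obtain \<delta> where delta: "tr \<delta> = - 1" using exists_tr \<open>- 1 \<in> F0\<close> by blast
      define u :: "nat \<Rightarrow> 'a" where "u = vadd (ev k) (smult_vec \<beta> (ev (k+1)))"
      define v :: "nat \<Rightarrow> 'a" where "v = vadd (ev k) (smult_vec \<delta> u)"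
      have uW: "u \<in> vecs m" using m by (simp add: u_def vecs_add vecs_smult vecs_ev)
      have vW: "v \<in> vecs m" using m uW by (simp add: v_def vecs_add vecs_smult vecs_ev)
      have ek: "herm q m (ev k :: nat \<Rightarrow> 'a) (ev k) = 1" "herm q m (ev (k+1) :: nat \<Rightarrow> 'a) (ev (k+1)) = 1"
        "herm q m (ev k :: nat \<Rightarrow> 'a) (ev (k+1)) = 0" "herm q m (ev (k+1) :: nat \<Rightarrow> 'a) (ev k) = 0"
        using m by (simp_all add: herm_ev_ev)
      have Qu: "herm q m u u = 0"
        using beta ek by (simp add: u_def herm_add_l herm_add_r herm_smult_l herm_smult_r nm_def mult.commute)
      have eu: "herm q m (ev k) u = 1" using ek by (simp add: u_def herm_add_r herm_smult_r)
      have ue: "herm q m u (ev k) = 1" using herm_sym[of m u "ev k"] eu by simp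
      have Qv: "herm q m v v = 0"
      proof -
        have "herm q m v v = 1 + tr \<delta>"
          using ek eu ue Qu by (simp add: v_def herm_add_l herm_add_r herm_smult_l herm_smult_r tr_def algebra_simps)
        then show ?thesis using delta by simp
      qed
      have uv: "herm q m u v = 1" using ue Qu by (simp add: v_def herm_add_r herm_smult_r)
      interpret hs: hsplit q \<alpha> m "vecs m" u v
        by unfold_locales (simp_all add: subsp_vecs uW vW Qu Qv uv)
      have hwu: "herm q m w u = w k + sg \<beta> * w (k+1)" if "w \<in> vecs m" for w
        using m by (simp add: u_def herm_add_r herm_smult_r herm_ev_r)
      have hwv: "herm q m w v = w k + sg \<delta> * herm q m w u" if "w \<in> vecs m" for w
        using m by (simp add: v_def herm_add_r herm_smult_r herm_ev_r)
      have W'eq: "hs.W' = vecs k"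
      proof
        show "hs.W' \<subseteq> vecs k"
        proof
          fix w assume w: "w \<in> hs.W'"
          then have wm: "w \<in> vecs m" and h1: "herm q m w u = 0" and h2: "herm q m w v = 0"
            by (auto simp: hs.W'_def)
          then have "w k = 0" using hwv by simp
          then have "sg \<beta> * w (k+1) = 0" using h1 hwu wm by simp
          then have "w (k+1) = 0" using bnz by simp
          show "w \<in> vecs k" unfolding vecs_def
          proof (intro CollectI allI impI)
            fix i assume "k \<le> i"
            then consider "i = k" | "i = k+1" | "i \<ge> m" using m by linarith
            then show "w i = 0"
            proof cases
              case 1 then show ?thesis using \<open>w k = 0\<close> by simp
            next
              case 2 then show ?thesis using \<open>w (k+1) = 0\<close> by simp
            next
              case 3 then show ?thesis using wm by (simp add: vecs_def)
            qed
          qed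
        qed
      next
        show "vecs k \<subseteq> hs.W'"
        proof
          fix w :: "nat \<Rightarrow> 'a" assume w: "w \<in> vecs k"
          have km: "k \<le> m" using m by simp
          have wm: "w \<in> vecs m" using vecs_mono[OF km] w by blast
          have "w k = 0" "w (k+1) = 0" using w by (auto simp: vecs_def)
          then show "w \<in> hs.W'" using wm hwu hwv by (simp add: hs.W'_def)
        qed
      qed
      have restr: "{w \<in> hs.W'. herm q m w w = c} = {w \<in> (vecs k :: (nat \<Rightarrow> 'a) set). herm q k w w = c}"
        using W'eq herm_vecs_restrict[of _ k m] m by auto
      show ?thesis
      proof (cases "c \<in> F0")
        case True
        have "card {z \<in> vecs m. herm q m z z = c} = M * q * card hs.W' + q^2 * card {w \<in> hs.W'. herm q m w w = c}"
          by (rule hs.count_Q[OF True])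
        also have "\<dots> = M * q * q^(2*k) + q^2 * G k c"
          using W'eq card_vecs[of k] restr less.IH[of k] m by simp
        finally show ?thesis using True m by (simp add: numeral_2_eq_2)
      next
        case False
        have "{z \<in> (vecs m :: (nat \<Rightarrow> 'a) set). herm q m z z = c} = {}" using False herm_self_F0 by auto
        then show ?thesis by (simp only: card.empty G_notF0[OF False])
      qed
    qed
  qed
qed

lemma card_Phi: "card (Phi q m :: (nat \<Rightarrow> 'a) set) + 1 = G m 0"
proof -
  have e: "{z \<in> (vecs m :: (nat \<Rightarrow> 'a) set). herm q m z z = 0} = insert (\<lambda>_. 0) (Phi q m)"
    by (auto simp: Phi_def)
  have "finite (Phi q m :: (nat \<Rightarrow> 'a) set)"
    using card_vecs[of m] by (rule conjE) (auto intro: finite_subset simp: Phi_def)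
  moreover have "(\<lambda>_. 0) \<notin> (Phi q m :: (nat \<Rightarrow> 'a) set)" by (simp add: Phi_def)
  ultimately show ?thesis using count_vecs[of m 0] e by simp
qed

lemma G_closed:
  assumes "d \<in> F0" "d \<noteq> 0" "k \<ge> 1"
  shows "int (G k d) = int q ^ (2*k - 1) - (-1) ^ k * int q ^ (k - 1)"
  using assms(3)
proof (induction k rule: less_induct)
  case (less k)
  show ?case
  proof (cases k)
    case 0 then show ?thesis using less by simp
  next
    case (Suc j)
    show ?thesis
    proof (cases j)
      case 0 then show ?thesis using Suc assms by simp
    next
      case (Suc i)
      show ?thesis
      proof (cases i)
        case 0
        have "int (G 2 d) = int (M * q)" using assms by (simp add: numeral_2_eq_2)
        also have "\<dots> = int q ^ 3 - int q"
          using q_ge2 by (simp add: of_nat_diff power2_eq_square power3_eq_cube algebra_simps)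
        finally show ?thesis using \<open>k = Suc j\<close> Suc 0 by (simp add: numeral_3_eq_3 numeral_2_eq_2)
      next
        case (Suc l)
        have k: "k = Suc (Suc i)" using \<open>k = Suc j\<close> \<open>j = Suc i\<close> by simp
        have IH: "int (G i d) = int q ^ (2*i - 1) - (-1) ^ i * int q ^ (i - 1)"
          using less.IH[of i] k Suc by simp
        have "int (G k d) = int M * int q * int q ^ (2*i) + int q ^ 2 * int (G i d)"
          using k assms by simp
        also have "int M = int q ^ 2 - 1" using q_ge2 by (simp add: of_nat_diff)
        also note IH
        finally have e: "int (G k d) = (int q ^ 2 - 1) * int q * int q ^ (2*i) + int q ^ 2 * (int q ^ (2*i - 1) - (-1) ^ i * int q ^ (i - 1))" .
        define r where "r = 2*i - 1"
        have r1: "2*i = Suc r" using Suc by (simp add: r_def)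
        have p1: "int q ^ (2*i) = int q * int q ^ r" by (simp only: r1 power_Suc)
        have r2: "2*k - 1 = 4 + r" using Suc k by (simp add: r_def)
        have p2: "int q ^ (2*k - 1) = int q ^ 4 * int q ^ r" by (simp only: r2 power_add)
        have r3: "k - 1 = 2 + (i - 1)" using Suc k by simp
        have p3: "int q ^ (k - 1) = int q ^ 2 * int q ^ (i - 1)" by (simp only: r3 power_add)
        have p4: "(-1::int) ^ k = (-1) ^ i" using k by simp
        have e2: "int (G k d) = (int q ^ 2 - 1) * int q * (int q * int q ^ r) + int q ^ 2 * (int q ^ r - (-1) ^ i * int q ^ (i - 1))"
          using e unfolding p1 r_def .
        show ?thesis unfolding e2 p2 p3 p4 by (rule aux_id)
      qed
    qed
  qed
qed

end

context hsplit
begin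

lemma inherit:
  assumes cW: "card W = q^(2*(k+2))" and GW: "\<And>c. card {z\<in>W. herm q m z z = c} = G (k+2) c"
  shows "card W' = q^(2*k) \<and> (\<forall>c. card {w\<in>W'. herm q m w w = c} = G k c)"
proof -
  have "2*(k+2) = 4 + 2*k" by simp
  then have "q^(2*(k+2)) = q^4 * q^(2*k)" by (simp only: power_add)
  then have "q^4 * card W' = q^4 * q^(2*k)" using cW card_W by simp
  then have c1: "card W' = q^(2*k)" using q_pos by simp
  have "card {w\<in>W'. herm q m w w = c} = G k c" for c
  proof (cases "c \<in> F0")
    case True
    have "G (k+2) c = M * q * q^(2*k) + q^2 * G k c" using True by (simp add: numeral_2_eq_2)
    moreover have "G (k+2) c = M * q * card W' + q^2 * card {w\<in>W'. herm q m w w = c}"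
      using GW[of c] count_Q[OF True] by simp
    ultimately have "q^2 * G k c = q^2 * card {w\<in>W'. herm q m w w = c}" using c1 by simp
    then show ?thesis using q_pos by simp
  next
    case False
    have "{w\<in>W'. herm q m w w = c} = {}" using False herm_self_F0 by auto
    then show ?thesis by (simp only: card.empty G_notF0[OF False])
  qed
  then show ?thesis using c1 by blast
qed

end


context hsplit
begin

lemma count_B:
  "card {z\<in>W. herm q m z z = 0 \<and> herm q m z v = a \<and> herm q m z u = b}
     = card {w\<in>W'. herm q m w w = - tr (a * sg b)}"
proof -
  have "card {z\<in>W. herm q m z z = 0 \<and> herm q m z v = a \<and> herm q m z u = b}
     = card {t \<in> (UNIV::'a set) \<times> (UNIV::'a set) \<times> W'. fst t = a \<and> fst (snd t) = b \<and>
          herm q m (snd (snd t)) (snd (snd t)) = - tr (a * sg b)}"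
    unfolding card_filter_split by (rule arg_cong[where f=card]) (auto simp: phi_Q phi_v phi_u add_eq_0_iff2)
  also have "{t \<in> (UNIV::'a set) \<times> (UNIV::'a set) \<times> W'. fst t = a \<and> fst (snd t) = b \<and>
          herm q m (snd (snd t)) (snd (snd t)) = - tr (a * sg b)}
      = (\<lambda>w. (a, b, w)) ` {w\<in>W'. herm q m w w = - tr (a * sg b)}" by force
  also have "card \<dots> = card {w\<in>W'. herm q m w w = - tr (a * sg b)}"
    by (rule card_image) (auto simp: inj_on_def)
  finally show ?thesis .
qed

end

context uf
begin

lemma Phi_filter:
  "card {z\<in>Phi q n. P z} = card {z\<in>vecs n. herm q n z z = 0 \<and> P z} - (if P (\<lambda>_. 0::'a) then 1 else 0)"
proof -
  have fin: "finite {z\<in>(vecs n::(nat\<Rightarrow>'a) set). herm q n z z = 0 \<and> P z}"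
    using card_vecs[of n] by (rule conjE) auto
  have e: "{z\<in>Phi q n. P z} = {z\<in>(vecs n::(nat\<Rightarrow>'a) set). herm q n z z = 0 \<and> P z} - {\<lambda>_. 0}"
    by (auto simp: Phi_def)
  show ?thesis
  proof (cases "P (\<lambda>_. 0)")
    case True
    then have "(\<lambda>_. 0) \<in> {z\<in>(vecs n::(nat\<Rightarrow>'a) set). herm q n z z = 0 \<and> P z}" by simp
    then show ?thesis using e fin True by (simp add: card_Diff_singleton)
  next
    case False
    then have "{z\<in>(vecs n::(nat\<Rightarrow>'a) set). herm q n z z = 0 \<and> P z} - {\<lambda>_. 0}
       = {z\<in>(vecs n::(nat\<Rightarrow>'a) set). herm q n z z = 0 \<and> P z}" by auto
    then show ?thesis using e False by simp
  qed
qed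

lemma Phi_vecs: "x \<in> Phi q n \<Longrightarrow> x \<in> vecs n" by (simp add: Phi_def)
lemma Phi_Q: "x \<in> Phi q n \<Longrightarrow> herm q n x x = 0" by (simp add: Phi_def)
lemma Phi_nz: "x \<in> Phi q n \<Longrightarrow> x \<noteq> (\<lambda>_. 0)" by (simp add: Phi_def)

lemma x_split:
  fixes x :: "nat \<Rightarrow> 'a"
  assumes x: "x \<in> Phi q n" and n: "n = k + 2"
  shows "\<exists>u. hsplit q \<alpha> n (vecs n) u x \<and>
     card {w\<in>vecs n. herm q n w u = 0 \<and> herm q n w x = 0} = q^(2*k) \<and>
     (\<forall>c. card {w\<in>{w\<in>vecs n. herm q n w u = 0 \<and> herm q n w x = 0}. herm q n w w = c} = G k c)"
proof -
  obtain j where j: "j < n" "herm q n (ev j) x \<noteq> 0"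
    using vecs_nonzero_ev[OF Phi_vecs[OF x] Phi_nz[OF x]] by blast
  obtain u where u: "u \<in> vecs n" "herm q n u u = 0" "herm q n u x = 1"
    using partner[OF subsp_vecs Phi_vecs[OF x] Phi_Q[OF x] vecs_ev[OF j(1)] j(2)] by blast
  interpret hs: hsplit q \<alpha> n "vecs n" u x
    by unfold_locales (simp_all add: subsp_vecs u Phi_vecs[OF x] Phi_Q[OF x])
  have "card hs.W' = q^(2*k) \<and> (\<forall>c. card {w\<in>hs.W'. herm q n w w = c} = G k c)"
    by (rule hs.inherit) (use card_vecs[of n] count_vecs[of n] n in auto)
  then show ?thesis using hs.hsplit_axioms by (auto simp: hs.W'_def)
qed

lemma confA:
  fixes x :: "nat \<Rightarrow> 'a"
  assumes x: "x \<in> Phi q n" and n: "n = k + 2"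
  shows "card {z\<in>Phi q n. herm q n x z = \<gamma>} = (if \<gamma> = 0 then q^2 * G k 0 - 1 else q^(2*k+1))"
proof -
  obtain u where hs0: "hsplit q \<alpha> n (vecs n) u x" and
    c1: "card {w\<in>vecs n. herm q n w u = 0 \<and> herm q n w x = 0} = q^(2*k)" and
    c2: "\<forall>c. card {w\<in>{w\<in>vecs n. herm q n w u = 0 \<and> herm q n w x = 0}. herm q n w w = c} = G k c"
    using x_split[OF x n] by blast
  interpret hs: hsplit q \<alpha> n "vecs n" u x by (rule hs0)
  have W': "hs.W' = {w\<in>vecs n. herm q n w u = 0 \<and> herm q n w x = 0}" by (simp add: hs.W'_def)
  have eqv: "herm q n x z = \<gamma> \<longleftrightarrow> herm q n z x = sg \<gamma>" for z
    using herm_sym[of n z x] by auto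
  have "card {z\<in>Phi q n. herm q n x z = \<gamma>} = card {z\<in>vecs n. herm q n z z = 0 \<and> herm q n x z = \<gamma>}
        - (if herm q n x (\<lambda>_. 0) = \<gamma> then 1 else 0)"
    by (rule Phi_filter)
  also have "{z\<in>vecs n. herm q n z z = 0 \<and> herm q n x z = \<gamma>} = {z\<in>vecs n. herm q n z z = 0 \<and> herm q n z x = sg \<gamma>}"
    using eqv by auto
  also have "card \<dots> = (if sg \<gamma> = 0 then q^2 * card {w\<in>hs.W'. herm q n w w = 0} else q * card hs.W')"
    by (rule hs.count_N1)
  also have "\<dots> = (if \<gamma> = 0 then q^2 * G k 0 else q^(2*k+1))"
    using c1 c2 W' by simp
  finally show ?thesis by simp
qed

lemma confB:
  fixes x y :: "nat \<Rightarrow> 'a"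
  assumes x: "x \<in> Phi q n" and y: "y \<in> Phi q n" and c: "herm q n x y = c" "c \<noteq> 0" and n: "n = k + 2"
  shows "card {z\<in>Phi q n. herm q n x z = \<gamma>1 \<and> herm q n z y = \<gamma>2}
       = G k (- tr (\<gamma>1 * \<gamma>2 / c)) - (if \<gamma>1 = 0 \<and> \<gamma>2 = 0 then 1 else 0)"
proof -
  define \<mu> where "\<mu> = sg (1 / c)"
  define v where "v = smult_vec \<mu> y"
  have sgmu: "sg \<mu> = 1 / c" by (simp add: \<mu>_def)
  have vW: "v \<in> vecs n" using y by (simp add: v_def vecs_smult Phi_vecs)
  have Qv: "herm q n v v = 0" using y by (simp add: v_def herm_smult_l herm_smult_r Phi_Q)
  have xv: "herm q n x v = 1" using c by (simp add: v_def herm_smult_r sgmu)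
  interpret hs: hsplit q \<alpha> n "vecs n" x v
    by unfold_locales (simp_all add: subsp_vecs vW Qv xv Phi_vecs[OF x] Phi_Q[OF x])
  have inh: "card hs.W' = q^(2*k) \<and> (\<forall>c. card {w\<in>hs.W'. herm q n w w = c} = G k c)"
    by (rule hs.inherit) (use card_vecs[of n] count_vecs[of n] n in auto)
  have eqv: "(herm q n x z = \<gamma>1 \<and> herm q n z y = \<gamma>2) \<longleftrightarrow> (herm q n z v = \<gamma>2 / c \<and> herm q n z x = sg \<gamma>1)" for z
  proof -
    have "herm q n z v = herm q n z y / c" by (simp add: v_def herm_smult_r sgmu)
    moreover have "herm q n z y / c = \<gamma>2 / c \<longleftrightarrow> herm q n z y = \<gamma>2" using c(2) by simp
    moreover have "herm q n x z = \<gamma>1 \<longleftrightarrow> herm q n z x = sg \<gamma>1" using herm_sym[of n z x] by auto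
    ultimately show ?thesis by auto
  qed
  have "card {z\<in>Phi q n. herm q n x z = \<gamma>1 \<and> herm q n z y = \<gamma>2}
      = card {z\<in>vecs n. herm q n z z = 0 \<and> (herm q n x z = \<gamma>1 \<and> herm q n z y = \<gamma>2)}
        - (if herm q n x (\<lambda>_. 0) = \<gamma>1 \<and> herm q n (\<lambda>_. 0) y = \<gamma>2 then 1 else 0)"
    by (rule Phi_filter)
  also have "{z\<in>vecs n. herm q n z z = 0 \<and> (herm q n x z = \<gamma>1 \<and> herm q n z y = \<gamma>2)}
      = {z\<in>vecs n. herm q n z z = 0 \<and> herm q n z v = \<gamma>2 / c \<and> herm q n z x = sg \<gamma>1}"
    using eqv by auto
  also have "card \<dots> = card {w\<in>hs.W'. herm q n w w = - tr (\<gamma>2 / c * sg (sg \<gamma>1))}"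
    by (rule hs.count_B)
  also have "\<dots> = G k (- tr (\<gamma>1 * \<gamma>2 / c))" using inh by (simp add: mult.commute)
  finally show ?thesis by simp
qed

end


context uf
begin

lemma confC:
  fixes x y :: "nat \<Rightarrow> 'a"
  assumes x: "x \<in> Phi q n" and y: "y \<in> Phi q n" and xy: "herm q n x y = 0"
    and ind: "\<not> (\<exists>c. y = smult_vec c x)" and n: "n = k + 4"
  shows "card {z\<in>Phi q n. herm q n x z = \<gamma>1 \<and> herm q n z y = \<gamma>2}
       = (if \<gamma>1 = 0 \<and> \<gamma>2 = 0 then q^4 * G k 0 - 1 else q^(2*k+3))"
proof -
  have n2: "n = (k + 2) + 2" using n by simp
  obtain u where hs0: "hsplit q \<alpha> n (vecs n) u x" and
    c1: "card {w\<in>vecs n. herm q n w u = 0 \<and> herm q n w x = 0} = q^(2*(k+2))" and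
    c2: "\<forall>c. card {w\<in>{w\<in>vecs n. herm q n w u = 0 \<and> herm q n w x = 0}. herm q n w w = c} = G (k+2) c"
    using x_split[OF x n2] by blast
  interpret hs: hsplit q \<alpha> n "vecs n" u x by (rule hs0)
  have W': "hs.W' = {w\<in>vecs n. herm q n w u = 0 \<and> herm q n w x = 0}" by (simp add: hs.W'_def)
  have yx: "herm q n y x = 0" using herm_sym[of n y x] xy by simp
  have xu: "herm q n x u = 1" using herm_sym[of n x u] hs.uv by simp
  define \<beta> where "\<beta> = herm q n y u"
  define wy where "wy = vsub y (smult_vec \<beta> x)"
  have wyV: "wy \<in> vecs n" using x y by (simp add: wy_def vecs_sub vecs_smult Phi_vecs)
  have wyW': "wy \<in> hs.W'"
    using wyV yx xu Phi_Q[OF x] by (simp add: W' wy_def herm_sub_l herm_smult_l \<beta>_def)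
  have wynz: "wy \<noteq> (\<lambda>_. 0)"
  proof
    assume "wy = (\<lambda>_. 0)"
    then have "y = smult_vec \<beta> x" by (auto simp: wy_def vsub_def smult_vec_def fun_eq_iff)
    then show False using ind by blast
  qed
  have Qwy: "herm q n wy wy = 0"
    using Phi_Q[OF x] Phi_Q[OF y] xy yx
    by (simp add: wy_def herm_sub_l herm_sub_r herm_smult_l herm_smult_r)
  have hzy: "herm q n z y = herm q n z wy + sg \<beta> * herm q n z x" for z
  proof -
    have "y = vadd wy (smult_vec \<beta> x)" by (simp add: wy_def vadd_def vsub_def smult_vec_def fun_eq_iff)
    then show ?thesis by (simp add: herm_add_r herm_smult_r)
  qed
  obtain j where j: "j < n" "herm q n (ev j) wy \<noteq> 0"
    using vecs_nonzero_ev[OF wyV wynz] by blast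
  define w0 where "w0 = snd (snd (hs.psi (ev j)))"
  have w0W': "w0 \<in> hs.W'" unfolding w0_def by (rule hs.psi_W'[OF vecs_ev[OF j(1)]])
  have w0wy: "herm q n w0 wy \<noteq> 0"
  proof -
    have "herm q n w0 wy = herm q n (ev j) wy"
      using hs.uw[OF wyW'] hs.vw[OF wyW']
      by (simp add: w0_def hs.psi_def herm_sub_l herm_smult_l)
    then show ?thesis using j by simp
  qed
  obtain u2 where u2: "u2 \<in> hs.W'" "herm q n u2 u2 = 0" "herm q n u2 wy = 1"
    using partner[OF hs.subsp_W' wyW' Qwy w0W' w0wy] by blast
  interpret hs2: hsplit q \<alpha> n hs.W' u2 wy
    by unfold_locales (simp_all add: hs.subsp_W' u2 wyW' Qwy)
  have inh2: "card hs2.W' = q^(2*k) \<and> (\<forall>c. card {w\<in>hs2.W'. herm q n w w = c} = G k c)"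
    by (rule hs2.inherit) (use c1 c2 W' in auto)
  have fib: "q^2 * card {w\<in>hs.W'. herm q n w wy = e} = q^(2*(k+2))" for e
    using fiber_functional[OF hs.subsp_W' w0W' w0wy, of e] c1 W' by simp
  have fib2: "card {w\<in>hs.W'. herm q n w wy = e} = q^(2*k+2)" for e
  proof -
    have h: "2*(k+2) = 2 + (2*k+2)" by simp
    have "q^(2*(k+2)) = q^2 * q^(2*k+2)" by (simp only: h power_add)
    then have eq: "q^2 * card {w\<in>hs.W'. herm q n w wy = e} = q^2 * q^(2*k+2)" using fib[of e] by simp
    have nz: "q^2 \<noteq> 0" using q_pos by simp
    show ?thesis using eq mult_left_cancel[OF nz] by blast
  qed
  have N1in: "card {w\<in>hs.W'. herm q n w w = 0 \<and> herm q n w wy = a}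
      = (if a = 0 then q^2 * G k 0 else q * q^(2*k))" for a
    using hs2.count_N1[of a] inh2 by simp
  have eqv: "(herm q n x z = \<gamma>1 \<and> herm q n z y = \<gamma>2) \<longleftrightarrow>
       (herm q n z x = sg \<gamma>1 \<and> herm q n z wy = \<gamma>2 - sg \<beta> * sg \<gamma>1)" for z
    using herm_sym[of n z x] hzy[of z] by (auto simp: algebra_simps)
  have "card {z\<in>Phi q n. herm q n x z = \<gamma>1 \<and> herm q n z y = \<gamma>2}
      = card {z\<in>vecs n. herm q n z z = 0 \<and> (herm q n x z = \<gamma>1 \<and> herm q n z y = \<gamma>2)}
        - (if herm q n x (\<lambda>_. 0) = \<gamma>1 \<and> herm q n (\<lambda>_. 0) y = \<gamma>2 then 1 else 0)"
    by (rule Phi_filter)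
  also have "{z\<in>vecs n. herm q n z z = 0 \<and> (herm q n x z = \<gamma>1 \<and> herm q n z y = \<gamma>2)}
      = {z\<in>vecs n. herm q n z z = 0 \<and> herm q n z x = sg \<gamma>1 \<and> herm q n z wy = \<gamma>2 - sg \<beta> * sg \<gamma>1}"
    using eqv by auto
  also have "card \<dots> = (if sg \<gamma>1 = 0 then q^2 * card {w\<in>hs.W'. herm q n w w = 0 \<and> herm q n w wy = \<gamma>2 - sg \<beta> * sg \<gamma>1}
          else q * card {w\<in>hs.W'. herm q n w wy = \<gamma>2 - sg \<beta> * sg \<gamma>1})"
    by (rule hs.count_C[OF wyW'])
  also have "\<dots> = (if \<gamma>1 = 0 then (if \<gamma>2 = 0 then q^4 * G k 0 else q^(2*k+3)) else q^(2*k+3))"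
  proof -
    have h1: "2*k+3 = Suc (2*k+2)" by simp
    have p1: "q^(2*k+3) = q * q^(2*k+2)" by (simp only: h1 power_Suc)
    have h2: "2*k+3 = 2 + Suc (2*k)" by simp
    have p2: "q^(2*k+3) = q^2 * (q * q^(2*k))" by (simp only: h2 power_add power_Suc)
    have p3: "q^2 * (q^2 * G k 0) = q^4 * G k 0" by (simp add: power_add[symmetric])
    show ?thesis
    proof (cases "\<gamma>1 = 0")
      case True
      then show ?thesis using N1in[of \<gamma>2] p2 p3 by simp
    next
      case False
      then show ?thesis using fib2 p1 by simp
    qed
  qed
  finally show ?thesis by auto
qed

end


context uf
begin

abbreviation "DD \<equiv> 2*q^2 - 2"

lemma q2_ge4: "q^2 \<ge> 4" using q_ge2 power_mono[of 2 q 2] by simp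

lemma Rel_I1: "l \<le> q^2 - 2 \<Longrightarrow> Rel q \<alpha> n l x y \<longleftrightarrow> x \<in> Phi q n \<and> y \<in> Phi q n \<and> y = smult_vec (\<alpha> ^ l) x"
  by (simp add: Rel_def)
lemma Rel_I2: "q^2 - 1 \<le> l \<Longrightarrow> l \<le> 2*q^2 - 3 \<Longrightarrow>
    Rel q \<alpha> n l x y \<longleftrightarrow> x \<in> Phi q n \<and> y \<in> Phi q n \<and> herm q n x y = \<alpha> ^ l"
proof -
  assume "q^2 - 1 \<le> l" "l \<le> 2*q^2 - 3"
  moreover have "\<not> l \<le> q^2 - 2" using q2_ge4 \<open>q^2 - 1 \<le> l\<close> by arith
  ultimately show ?thesis by (simp add: Rel_def)
qed
lemma Rel_D: "Rel q \<alpha> n DD x y \<longleftrightarrow> x \<in> Phi q n \<and> y \<in> Phi q n \<and> herm q n x y = 0 \<and> \<not> (\<exists>c. y = smult_vec c x)"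
proof -
  have "\<not> DD \<le> q^2 - 2" "\<not> DD \<le> 2*q^2 - 3" using q2_ge4 by arith+
  then show ?thesis by (simp add: Rel_def)
qed

lemma Rel_Phi: "Rel q \<alpha> n l x y \<Longrightarrow> x \<in> Phi q n \<and> y \<in> Phi q n"
  by (simp add: Rel_def)

lemma smult_Phi: "x \<in> Phi q n \<Longrightarrow> c \<noteq> 0 \<Longrightarrow> smult_vec c x \<in> Phi q n" for x :: "nat \<Rightarrow> 'a"
proof -
  assume x: "x \<in> Phi q n" and c: "c \<noteq> 0"
  obtain k where "x k \<noteq> 0" using Phi_nz[OF x] by auto
  then have "smult_vec c x \<noteq> (\<lambda>_. 0)" using c by (auto simp: smult_vec_def fun_eq_iff)
  moreover have "smult_vec c x \<in> vecs n" using Phi_vecs[OF x] by (rule vecs_smult)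
  moreover have "herm q n (smult_vec c x) (smult_vec c x) = 0" using Phi_Q[OF x] by (simp add: herm_smult_l herm_smult_r)
  ultimately show ?thesis by (simp add: Phi_def)
qed

lemma smult_smult: "smult_vec a (smult_vec b x) = smult_vec (a * b) x" for x :: "nat \<Rightarrow> 'a"
  by (simp add: smult_vec_def fun_eq_iff mult.assoc)

lemma smult_cancel: "x \<noteq> (\<lambda>_. 0::'a) \<Longrightarrow> smult_vec a x = smult_vec b x \<longleftrightarrow> a = b"
proof -
  assume "x \<noteq> (\<lambda>_. 0::'a)"
  then obtain k where "x k \<noteq> 0" by auto
  then show ?thesis by (auto simp: smult_vec_def fun_eq_iff)
qed

lemma smult_nz_coeff: "y \<noteq> (\<lambda>_. 0::'a) \<Longrightarrow> y = smult_vec c z \<Longrightarrow> c \<noteq> 0" for y :: "nat \<Rightarrow> 'a"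
  by (auto simp: smult_vec_def fun_eq_iff)

lemma smult_1[simp]: "smult_vec 1 x = x" for x :: "nat \<Rightarrow> 'a" by (simp add: smult_vec_def)

lemma smult_inv: "c \<noteq> 0 \<Longrightarrow> y = smult_vec c z \<longleftrightarrow> z = smult_vec (1/c) (y :: nat \<Rightarrow> 'a)"
  by (auto simp: smult_vec_def fun_eq_iff)

lemma span_card:
  fixes x :: "nat \<Rightarrow> 'a"
  assumes "x \<noteq> (\<lambda>_. 0)"
  shows "card ((\<lambda>c. smult_vec c x) ` (UNIV - {0})) = M"
proof -
  have "inj_on (\<lambda>c. smult_vec c x) (UNIV - {0})"
    using smult_cancel[OF assms] by (auto simp: inj_on_def)
  then show ?thesis using card_UNIV_a by (simp add: card_image card_Diff_singleton)
qed

lemma sg_alpha_pow: "sg (\<alpha> ^ a) = \<alpha> ^ (a * q)"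
  by (simp add: sg_def power_mult)

lemma pcount_I1_left:
  fixes x y :: "nat \<Rightarrow> 'a"
  assumes i: "i \<le> q^2 - 2" and x: "x \<in> Phi q n"
  shows "pcount q \<alpha> n i j x y = (if Rel q \<alpha> n j (smult_vec (\<alpha> ^ i) x) y then 1 else 0)"
proof -
  have "{z \<in> Phi q n. Rel q \<alpha> n i x z \<and> Rel q \<alpha> n j z y}
      = (if Rel q \<alpha> n j (smult_vec (\<alpha> ^ i) x) y then {smult_vec (\<alpha> ^ i) x} else {})"
    using i x smult_Phi[OF x, of "\<alpha>^i"] alpha_nz by (auto simp: Rel_I1)
  then show ?thesis by (simp add: pcount_def)
qed

lemma pcount_I1_right:
  fixes x y :: "nat \<Rightarrow> 'a"
  assumes j: "j \<le> q^2 - 2" and y: "y \<in> Phi q n"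
  shows "pcount q \<alpha> n i j x y = (if Rel q \<alpha> n i x (smult_vec (1 / \<alpha> ^ j) y) then 1 else 0)"
proof -
  have "{z \<in> Phi q n. Rel q \<alpha> n i x z \<and> Rel q \<alpha> n j z y}
      = (if Rel q \<alpha> n i x (smult_vec (1 / \<alpha> ^ j) y) then {smult_vec (1 / \<alpha> ^ j) y} else {})"
  proof -
    have "\<And>z. y = smult_vec (\<alpha> ^ j) z \<longleftrightarrow> z = smult_vec (1 / \<alpha> ^ j) y"
      by (rule smult_inv) (simp add: alpha_nz)
    then show ?thesis using j y smult_Phi[OF y, of "1/\<alpha>^j"] Rel_Phi by (auto simp: Rel_I1)
  qed
  then show ?thesis by (simp add: pcount_def)
qed

end


context uf
begin

declare alpha_nz[simp]

lemma h_cases: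
  assumes "h \<le> DD"
  obtains "h \<le> q^2 - 2" | "q^2 - 1 \<le> h" "h \<le> 2*q^2 - 3" | "h = DD"
  using assms q2_ge4 by arith

lemma herm_x_smult_x: "x \<in> Phi q n \<Longrightarrow> herm q n x (smult_vec c x) = 0" for x :: "nat \<Rightarrow> 'a"
  by (simp add: herm_smult_r Phi_Q)

lemma herm_smult_x_x: "x \<in> Phi q n \<Longrightarrow> herm q n (smult_vec c x) x = 0" for x :: "nat \<Rightarrow> 'a"
  by (simp add: herm_smult_l Phi_Q)

lemma span_scale:
  fixes x y :: "nat \<Rightarrow> 'a"
  assumes "a \<noteq> 0"
  shows "(\<exists>c. y = smult_vec c (smult_vec a x)) \<longleftrightarrow> (\<exists>c. y = smult_vec c x)"
proof
  assume "\<exists>c. y = smult_vec c (smult_vec a x)"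
  then show "\<exists>c. y = smult_vec c x" by (auto simp: smult_smult)
next
  assume "\<exists>c. y = smult_vec c x"
  then obtain c where "y = smult_vec c x" by auto
  then have "y = smult_vec (c / a) (smult_vec a x)" using assms by (simp add: smult_smult)
  then show "\<exists>c. y = smult_vec c (smult_vec a x)" by blast
qed

lemma span_scale_l:
  fixes x w :: "nat \<Rightarrow> 'a"
  assumes "a \<noteq> 0"
  shows "(\<exists>c. smult_vec a w = smult_vec c x) \<longleftrightarrow> (\<exists>c. w = smult_vec c x)"
proof
  assume "\<exists>c. smult_vec a w = smult_vec c x"
  then obtain c where "smult_vec a w = smult_vec c x" by auto
  then have "smult_vec (1/a) (smult_vec a w) = smult_vec (1/a) (smult_vec c x)" by simp
  then have "w = smult_vec (c / a) x" using assms by (simp add: smult_smult)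
  then show "\<exists>c. w = smult_vec c x" by blast
next
  assume "\<exists>c. w = smult_vec c x"
  then obtain c where "w = smult_vec c x" by auto
  then have "smult_vec a w = smult_vec (a * c) x" by (simp add: smult_smult)
  then show "\<exists>c. smult_vec a w = smult_vec c x" by blast
qed

lemma case1:
  fixes x y :: "nat \<Rightarrow> 'a"
  assumes i: "i \<le> q^2 - 2" and j: "j \<le> q^2 - 2" and h: "h \<le> DD" and R: "Rel q \<alpha> n h x y"
  shows "pcount q \<alpha> n i j x y = (if h \<le> q^2 - 2 \<and> [h = i + j] (mod M) then 1 else 0)"
proof -
  have x: "x \<in> Phi q n" and y: "y \<in> Phi q n" using Rel_Phi[OF R] by auto
  have p: "pcount q \<alpha> n i j x y = (if y = smult_vec (\<alpha> ^ (i + j)) x then 1 else 0)"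
    using pcount_I1_left[OF i x, of j y] smult_Phi[OF x, of "\<alpha>^i"] y j
    by (simp add: Rel_I1 smult_smult power_add mult.commute)
  show ?thesis
  proof (cases rule: h_cases[OF h])
    case 1
    then have "y = smult_vec (\<alpha> ^ h) x" using R by (simp add: Rel_I1)
    then have "y = smult_vec (\<alpha> ^ (i + j)) x \<longleftrightarrow> [h = i + j] (mod M)"
      using smult_cancel[OF Phi_nz[OF x]] alpha_pow_cong by simp
    then show ?thesis using p 1 by simp
  next
    case 2
    then have "herm q n x y = \<alpha> ^ h" using R by (simp add: Rel_I2)
    then have "y \<noteq> smult_vec (\<alpha> ^ (i + j)) x" using herm_x_smult_x[OF x] by auto
    moreover have "\<not> h \<le> q^2 - 2" using 2 q2_ge4 by arith
    ultimately show ?thesis using p by simp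
  next
    case 3
    then have "y \<noteq> smult_vec (\<alpha> ^ (i + j)) x" using R by (auto simp: Rel_D)
    moreover have "\<not> h \<le> q^2 - 2" using 3 q2_ge4 by arith
    ultimately show ?thesis using p by simp
  qed
qed

lemma case2:
  fixes x y :: "nat \<Rightarrow> 'a"
  assumes i: "i \<le> q^2 - 2" and j1: "q^2 - 1 \<le> j" "j \<le> 2*q^2 - 3" and h: "h \<le> DD" and R: "Rel q \<alpha> n h x y"
  shows "pcount q \<alpha> n i j x y = (if (q^2 - 1 \<le> h \<and> h \<le> 2*q^2 - 3) \<and> [h + i = j] (mod M) then 1 else 0)"
proof -
  have x: "x \<in> Phi q n" and y: "y \<in> Phi q n" using Rel_Phi[OF R] by auto
  have p: "pcount q \<alpha> n i j x y = (if \<alpha> ^ i * herm q n x y = \<alpha> ^ j then 1 else 0)"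
    using pcount_I1_left[OF i x, of j y] smult_Phi[OF x, of "\<alpha>^i"] y j1
    by (simp add: Rel_I2 herm_smult_l)
  show ?thesis
  proof (cases rule: h_cases[OF h])
    case 1
    then have "herm q n x y = 0" using R herm_x_smult_x[OF x] by (auto simp: Rel_I1)
    moreover have "\<not> q^2 - 1 \<le> h" using 1 q2_ge4 by arith
    ultimately show ?thesis using p by simp
  next
    case 2
    then have "herm q n x y = \<alpha> ^ h" using R by (simp add: Rel_I2)
    then have "\<alpha> ^ i * herm q n x y = \<alpha> ^ (h + i)" by (simp add: power_add mult.commute)
    then show ?thesis using p 2 alpha_pow_cong by simp
  next
    case 3
    then have "herm q n x y = 0" using R by (simp add: Rel_D)
    moreover have "\<not> h \<le> 2*q^2 - 3" using 3 q2_ge4 by arith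
    ultimately show ?thesis using p by simp
  qed
qed

lemma case3:
  fixes x y :: "nat \<Rightarrow> 'a"
  assumes i: "i \<le> q^2 - 2" and h: "h \<le> DD" and R: "Rel q \<alpha> n h x y"
  shows "pcount q \<alpha> n i DD x y = (if h = DD then 1 else 0)"
proof -
  have x: "x \<in> Phi q n" and y: "y \<in> Phi q n" using Rel_Phi[OF R] by auto
  have p: "pcount q \<alpha> n i DD x y = (if herm q n x y = 0 \<and> \<not> (\<exists>c. y = smult_vec c x) then 1 else 0)"
    using pcount_I1_left[OF i x, of DD y] smult_Phi[OF x, of "\<alpha>^i"] y span_scale[of "\<alpha>^i" y x]
    by (simp add: Rel_D herm_smult_l alpha_nz)
  show ?thesis
  proof (cases rule: h_cases[OF h])
    case 1
    then have "\<exists>c. y = smult_vec c x" using R by (auto simp: Rel_I1)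
    moreover have "h \<noteq> DD" using 1 q2_ge4 by arith
    ultimately show ?thesis using p by simp
  next
    case 2
    then have "herm q n x y \<noteq> 0" using R by (simp add: Rel_I2)
    moreover have "h \<noteq> DD" using 2 q2_ge4 by arith
    ultimately show ?thesis using p by simp
  next
    case 3
    then show ?thesis using p R by (simp add: Rel_D)
  qed
qed

lemma case4:
  fixes x y :: "nat \<Rightarrow> 'a"
  assumes i1: "q^2 - 1 \<le> i" "i \<le> 2*q^2 - 3" and j: "j \<le> q^2 - 2" and h: "h \<le> DD" and R: "Rel q \<alpha> n h x y"
  shows "pcount q \<alpha> n i j x y = (if (q^2 - 1 \<le> h \<and> h \<le> 2*q^2 - 3) \<and> [h = i + j * q] (mod M) then 1 else 0)"
proof -
  have x: "x \<in> Phi q n" and y: "y \<in> Phi q n" using Rel_Phi[OF R] by auto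
  have p: "pcount q \<alpha> n i j x y = (if herm q n x y / sg (\<alpha> ^ j) = \<alpha> ^ i then 1 else 0)"
    using pcount_I1_right[OF j y, of i x] smult_Phi[OF y, of "1/\<alpha>^j"] x i1 alpha_nz
    by (simp add: Rel_I2 herm_smult_r sg_div)
  show ?thesis
  proof (cases rule: h_cases[OF h])
    case 1
    then have "herm q n x y = 0" using R herm_x_smult_x[OF x] by (auto simp: Rel_I1)
    moreover have "\<not> q^2 - 1 \<le> h" using 1 q2_ge4 by arith
    ultimately show ?thesis using p by simp
  next
    case 2
    then have hxy: "herm q n x y = \<alpha> ^ h" using R by (simp add: Rel_I2)
    have "herm q n x y / sg (\<alpha> ^ j) = \<alpha> ^ i \<longleftrightarrow> \<alpha> ^ h = \<alpha> ^ i * sg (\<alpha> ^ j)"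
      using hxy alpha_nz by (auto simp: field_simps)
    also have "\<dots> \<longleftrightarrow> \<alpha> ^ h = \<alpha> ^ (i + j * q)" by (simp add: sg_alpha_pow power_add)
    finally show ?thesis using p 2 alpha_pow_cong by simp
  next
    case 3
    then have "herm q n x y = 0" using R by (simp add: Rel_D)
    moreover have "\<not> h \<le> 2*q^2 - 3" using 3 q2_ge4 by arith
    ultimately show ?thesis using p by simp
  qed
qed

lemma case7:
  fixes x y :: "nat \<Rightarrow> 'a"
  assumes j: "j \<le> q^2 - 2" and h: "h \<le> DD" and R: "Rel q \<alpha> n h x y"
  shows "pcount q \<alpha> n DD j x y = (if h = DD then 1 else 0)"
proof -
  have x: "x \<in> Phi q n" and y: "y \<in> Phi q n" using Rel_Phi[OF R] by auto
  have nz: "1 / \<alpha> ^ j \<noteq> 0" using alpha_nz by simp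
  have p: "pcount q \<alpha> n DD j x y = (if herm q n x y = 0 \<and> \<not> (\<exists>c. y = smult_vec c x) then 1 else 0)"
    using pcount_I1_right[OF j y, of DD x] smult_Phi[OF y nz] x span_scale_l[OF nz, of y x] alpha_nz
    by (simp add: Rel_D herm_smult_r sg_div)
  show ?thesis
  proof (cases rule: h_cases[OF h])
    case 1
    then have "\<exists>c. y = smult_vec c x" using R by (auto simp: Rel_I1)
    moreover have "h \<noteq> DD" using 1 q2_ge4 by arith
    ultimately show ?thesis using p by simp
  next
    case 2
    then have "herm q n x y \<noteq> 0" using R by (simp add: Rel_I2)
    moreover have "h \<noteq> DD" using 2 q2_ge4 by arith
    ultimately show ?thesis using p by simp
  next
    case 3
    then show ?thesis using p R by (simp add: Rel_D)
  qed
qed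

end


context uf
begin

lemma G_s: "G (n - 2) 0 = card (Phi q (n - 2) :: (nat \<Rightarrow> 'a) set) + 1"
  using card_Phi[of "n - 2"] by simp

lemma G_closed_n:
  assumes n: "n \<ge> 4" and d: "d \<in> F0" "d \<noteq> 0"
  shows "int (G (n - 2) d) = int q ^ (2*n - 5) + (- int q) ^ (n - 3)"
proof -
  have "int (G (n - 2) d) = int q ^ (2*(n-2) - 1) - (-1) ^ (n-2) * int q ^ (n - 2 - 1)"
    using G_closed[OF d, of "n-2"] n by simp
  moreover have "2*(n-2) - 1 = 2*n - 5" "n - 2 - 1 = n - 3" "n - 2 = Suc (n - 3)" using n by auto
  ultimately have "int (G (n - 2) d) = int q ^ (2*n - 5) - (-1) ^ (Suc (n-3)) * int q ^ (n - 3)"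
    by metis
  then show ?thesis by (simp add: power_minus[of "int q"])
qed

lemma case5:
  fixes x y :: "nat \<Rightarrow> 'a"
  assumes n: "n \<ge> 4"
    and i1: "q^2 - 1 \<le> i" "i \<le> 2*q^2 - 3" and j1: "q^2 - 1 \<le> j" "j \<le> 2*q^2 - 3"
    and h: "h \<le> DD" and R: "Rel q \<alpha> n h x y"
  shows "(h \<le> q^2 - 2 \<longrightarrow> int (pcount q \<alpha> n i j x y) = (if [q * (h + i) = j] (mod M) then int q ^ (2*n - 3) else 0))
       \<and> (q^2 - 1 \<le> h \<and> h \<le> 2*q^2 - 3 \<longrightarrow> int (pcount q \<alpha> n i j x y) =
           (if [i + j = h + tt] (mod (q + 1)) then int (card (Phi q (n - 2) :: (nat \<Rightarrow> 'a) set)) + 1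
            else int q ^ (2*n - 5) + (- int q) ^ (n - 3)))
       \<and> (h = DD \<longrightarrow> int (pcount q \<alpha> n i j x y) = int q ^ (2*n - 5))"
proof -
  have x: "x \<in> Phi q n" and y: "y \<in> Phi q n" using Rel_Phi[OF R] by auto
  have p: "pcount q \<alpha> n i j x y = card {z\<in>Phi q n. herm q n x z = \<alpha> ^ i \<and> herm q n z y = \<alpha> ^ j}"
    unfolding pcount_def using x y i1 j1 by (auto simp: Rel_I2 intro!: arg_cong[where f=card])
  have n2: "n = (n - 2) + 2" and n4: "n = (n - 4) + 4" using n by auto
  show ?thesis
  proof (cases rule: h_cases[OF h])
    case 1
    then have yx: "y = smult_vec (\<alpha> ^ h) x" using R by (simp add: Rel_I1)
    have hzy: "herm q n z y = sg (\<alpha> ^ h * herm q n x z)" for z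
      using herm_sym[of n z x] by (simp add: yx herm_smult_r sg_mult)
    have e: "{z\<in>Phi q n. herm q n x z = \<alpha> ^ i \<and> herm q n z y = \<alpha> ^ j}
        = (if sg (\<alpha> ^ h * \<alpha> ^ i) = \<alpha> ^ j then {z\<in>Phi q n. herm q n x z = \<alpha> ^ i} else {})"
      using hzy by auto
    have c: "sg (\<alpha> ^ h * \<alpha> ^ i) = \<alpha> ^ j \<longleftrightarrow> [q * (h + i) = j] (mod M)"
      by (simp add: sg_alpha_pow power_add[symmetric] alpha_pow_cong mult.commute)
    have c0: "card {z\<in>Phi q n. herm q n x z = \<alpha> ^ i} = q ^ (2*(n-2)+1)"
      using confA[OF x n2, of "\<alpha>^i"] by simp
    have ex: "2*(n-2)+1 = 2*n - 3" using n by simp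
    have "q ^ (2*(n-2)+1) = q ^ (2*n - 3)" by (simp only: ex)
    then have "card {z\<in>Phi q n. herm q n x z = \<alpha> ^ i} = q ^ (2*n - 3)" using c0 by simp
    moreover have "\<not> q^2 - 1 \<le> h" "h \<noteq> DD" using 1 q2_ge4 by arith+
    ultimately show ?thesis using p e c 1 by simp
  next
    case 2
    then have hxy: "herm q n x y = \<alpha> ^ h" using R by (simp add: Rel_I2)
    have cB: "card {z\<in>Phi q n. herm q n x z = \<alpha> ^ i \<and> herm q n z y = \<alpha> ^ j}
       = G (n - 2) (- tr (\<alpha> ^ i * \<alpha> ^ j / \<alpha> ^ h))"
      using confB[OF x y hxy _ n2, of "\<alpha>^i" "\<alpha>^j"] by simp
    have tz: "tr (\<alpha> ^ i * \<alpha> ^ j / \<alpha> ^ h) = 0 \<longleftrightarrow> [i + j = h + tt] (mod (q + 1))"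
      using tr_alpha_div_zero_iff[of "i+j" h] by (simp add: power_add)
    have val: "int (pcount q \<alpha> n i j x y) =
           (if [i + j = h + tt] (mod (q + 1)) then int (card (Phi q (n - 2) :: (nat \<Rightarrow> 'a) set)) + 1
            else int q ^ (2*n - 5) + (- int q) ^ (n - 3))"
    proof (cases "[i + j = h + tt] (mod (q + 1))")
      case True
      then show ?thesis using p cB tz G_s by simp
    next
      case False
      define d where "d = - tr (\<alpha> ^ i * \<alpha> ^ j / \<alpha> ^ h)"
      have dF: "d \<in> F0" unfolding d_def by (rule F0_neg[OF tr_F0])
      have dnz: "d \<noteq> 0" using False tz by (simp add: d_def)
      show ?thesis using p cB False G_closed_n[OF n dF dnz] by (simp add: d_def)
    qed
    have "h \<noteq> DD" "\<not> h \<le> q^2 - 2" using 2 q2_ge4 by arith+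
    then show ?thesis using val 2 by simp
  next
    case 3
    then have hxy: "herm q n x y = 0" and ind: "\<not> (\<exists>c. y = smult_vec c x)" using R by (auto simp: Rel_D)
    have c0: "card {z\<in>Phi q n. herm q n x z = \<alpha> ^ i \<and> herm q n z y = \<alpha> ^ j} = q^(2*(n-4)+3)"
      using confC[OF x y hxy ind n4, of "\<alpha>^i" "\<alpha>^j"] by simp
    have ex: "2*(n-4)+3 = 2*n - 5" using n by simp
    have "q ^ (2*(n-4)+3) = q ^ (2*n - 5)" by (simp only: ex)
    then have "card {z\<in>Phi q n. herm q n x z = \<alpha> ^ i \<and> herm q n z y = \<alpha> ^ j} = q ^ (2*n - 5)" using c0 by simp
    moreover have "\<not> h \<le> q^2 - 2" "\<not> h \<le> 2*q^2 - 3" using 3 q2_ge4 by arith+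
    ultimately show ?thesis using p 3 by simp
  qed
qed

end


context uf
begin

definition spanstar :: "(nat \<Rightarrow> 'a) \<Rightarrow> (nat \<Rightarrow> 'a) set" where
  "spanstar x = (\<lambda>c. smult_vec c x) ` (UNIV - {0})"

lemma finite_Phi: "finite (Phi q n :: (nat \<Rightarrow> 'a) set)"
  using card_vecs[of n] by (rule conjE) (auto intro: finite_subset simp: Phi_def)

lemma in_spanstar:
  fixes x z :: "nat \<Rightarrow> 'a"
  assumes z: "z \<in> Phi q n"
  shows "(\<exists>c. z = smult_vec c x) \<longleftrightarrow> z \<in> spanstar x"
proof
  assume "\<exists>c. z = smult_vec c x"
  then obtain c where c: "z = smult_vec c x" by auto
  then have "c \<noteq> 0" using smult_nz_coeff[OF Phi_nz[OF z]] by blast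
  then show "z \<in> spanstar x" using c by (auto simp: spanstar_def)
qed (auto simp: spanstar_def)

lemma y_span_z:
  fixes y z :: "nat \<Rightarrow> 'a"
  assumes y: "y \<in> Phi q n" and z: "z \<in> Phi q n"
  shows "(\<exists>c. y = smult_vec c z) \<longleftrightarrow> (\<exists>c. z = smult_vec c y)"
proof
  assume "\<exists>c. y = smult_vec c z"
  then obtain c where c: "y = smult_vec c z" by auto
  then have "c \<noteq> 0" using smult_nz_coeff[OF Phi_nz[OF y]] by blast
  then show "\<exists>c. z = smult_vec c y" using c smult_inv by blast
next
  assume "\<exists>c. z = smult_vec c y"
  then obtain c where c: "z = smult_vec c y" by auto
  then have "c \<noteq> 0" using smult_nz_coeff[OF Phi_nz[OF z]] by blast
  then show "\<exists>c. y = smult_vec c z" using c smult_inv by blast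
qed

lemma spanstar_sub: "x \<in> Phi q n \<Longrightarrow> spanstar x \<subseteq> Phi q n" for x :: "nat \<Rightarrow> 'a"
  using smult_Phi by (auto simp: spanstar_def)

lemma card_spanstar: "x \<in> Phi q n \<Longrightarrow> card (spanstar x) = M" for x :: "nat \<Rightarrow> 'a"
  using span_card[OF Phi_nz] by (simp add: spanstar_def)

lemma case6:
  fixes x y :: "nat \<Rightarrow> 'a"
  assumes n: "n \<ge> 4"
    and i1: "q^2 - 1 \<le> i" "i \<le> 2*q^2 - 3"
    and h: "h \<le> DD" and R: "Rel q \<alpha> n h x y"
  shows "(h \<le> q^2 - 2 \<longrightarrow> pcount q \<alpha> n i DD x y = 0)
       \<and> (q^2 - 1 \<le> h \<and> h \<le> 2*q^2 - 3 \<longrightarrow> pcount q \<alpha> n i DD x y = card (Phi q (n - 2) :: (nat \<Rightarrow> 'a) set))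
       \<and> (h = DD \<longrightarrow> pcount q \<alpha> n i DD x y = q ^ (2*n - 5))"
proof -
  have x: "x \<in> Phi q n" and y: "y \<in> Phi q n" using Rel_Phi[OF R] by auto
  have p: "pcount q \<alpha> n i DD x y = card {z\<in>Phi q n. herm q n x z = \<alpha> ^ i \<and> herm q n z y = 0 \<and> \<not> (\<exists>c. y = smult_vec c z)}"
    unfolding pcount_def using x y i1 by (auto simp: Rel_I2 Rel_D intro!: arg_cong[where f=card])
  have n2: "n = (n - 2) + 2" and n4: "n = (n - 4) + 4" using n by auto
  show ?thesis
  proof (cases rule: h_cases[OF h])
    case 1
    then have yx: "y = smult_vec (\<alpha> ^ h) x" using R by (simp add: Rel_I1)
    have "herm q n z y \<noteq> 0" if "herm q n x z = \<alpha> ^ i" for z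
      using herm_sym[of n z x] that by (simp add: yx herm_smult_r sg_mult)
    then have e0: "{z\<in>Phi q n. herm q n x z = \<alpha> ^ i \<and> herm q n z y = 0 \<and> \<not> (\<exists>c. y = smult_vec c z)} = {}" by auto
    have "pcount q \<alpha> n i DD x y = 0" using p e0 by (simp only: card.empty)
    moreover have "\<not> q^2 - 1 \<le> h" "h \<noteq> DD" using 1 q2_ge4 by arith+
    ultimately show ?thesis by simp
  next
    case 2
    then have hxy: "herm q n x y = \<alpha> ^ h" using R by (simp add: Rel_I2)
    define d where "d = sg (\<alpha> ^ i / \<alpha> ^ h)"
    have dnz: "d \<noteq> 0" by (simp add: d_def)
    define w where "w = smult_vec d y"
    let ?S = "{z\<in>Phi q n. herm q n x z = \<alpha> ^ i \<and> herm q n z y = 0}"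
    have wS: "w \<in> ?S"
      using smult_Phi[OF y dnz] hxy Phi_Q[OF y] by (simp add: w_def herm_smult_r herm_smult_l d_def)
    have key: "(\<exists>c. y = smult_vec c z) \<longleftrightarrow> z = w" if z: "z \<in> ?S" for z
    proof
      assume "\<exists>c. y = smult_vec c z"
      then obtain c where c: "y = smult_vec c z" by auto
      then have cnz: "c \<noteq> 0" using smult_nz_coeff[OF Phi_nz[OF y]] by blast
      then have zy: "z = smult_vec (1/c) y" using c smult_inv by blast
      then have "sg (1/c) * \<alpha> ^ h = \<alpha> ^ i" using z hxy by (simp add: herm_smult_r)
      then have "sg (1/c) = \<alpha> ^ i / \<alpha> ^ h" by (simp add: field_simps)
      then have "1/c = d" unfolding d_def by (metis sg_sg)
      then show "z = w" using zy by (simp add: w_def)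
    next
      assume "z = w"
      then have "y = smult_vec (1/d) z" using dnz by (simp add: w_def smult_smult)
      then show "\<exists>c. y = smult_vec c z" by blast
    qed
    have e: "{z\<in>Phi q n. herm q n x z = \<alpha> ^ i \<and> herm q n z y = 0 \<and> \<not> (\<exists>c. y = smult_vec c z)} = ?S - {w}"
      using key by auto
    have cS: "card ?S = G (n - 2) 0"
      using confB[OF x y hxy _ n2, of "\<alpha>^i" 0] by (simp add: tr_def)
    have "card (?S - {w}) = card ?S - 1" using wS by (simp add: card_Diff_singleton)
    then have "pcount q \<alpha> n i DD x y = card (Phi q (n - 2) :: (nat \<Rightarrow> 'a) set)"
      using p e cS G_s[of n] by simp
    moreover have "h \<noteq> DD" "\<not> h \<le> q^2 - 2" using 2 q2_ge4 by arith+
    ultimately show ?thesis using 2 by simp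
  next
    case 3
    then have hxy: "herm q n x y = 0" and ind: "\<not> (\<exists>c. y = smult_vec c x)" using R by (auto simp: Rel_D)
    have "\<not> (\<exists>c. y = smult_vec c z)" if z1: "herm q n x z = \<alpha> ^ i" and z2: "z \<in> Phi q n" for z
    proof
      assume "\<exists>c. y = smult_vec c z"
      then obtain c where "z = smult_vec c y" using y_span_z[OF y z2] by blast
      then show False using z1 hxy by (simp add: herm_smult_r)
    qed
    then have e: "{z\<in>Phi q n. herm q n x z = \<alpha> ^ i \<and> herm q n z y = 0 \<and> \<not> (\<exists>c. y = smult_vec c z)}
        = {z\<in>Phi q n. herm q n x z = \<alpha> ^ i \<and> herm q n z y = 0}" by auto
    have c0: "card {z\<in>Phi q n. herm q n x z = \<alpha> ^ i \<and> herm q n z y = 0} = q^(2*(n-4)+3)"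
      using confC[OF x y hxy ind n4, of "\<alpha>^i" 0] by simp
    have ex: "2*(n-4)+3 = 2*n - 5" using n by simp
    have "q ^ (2*(n-4)+3) = q ^ (2*n - 5)" by (simp only: ex)
    then have "pcount q \<alpha> n i DD x y = q ^ (2*n - 5)" using c0 p e by simp
    moreover have "\<not> h \<le> q^2 - 2" "\<not> h \<le> 2*q^2 - 3" using 3 q2_ge4 by arith+
    ultimately show ?thesis using 3 by simp
  qed
qed

lemma case8:
  fixes x y :: "nat \<Rightarrow> 'a"
  assumes n: "n \<ge> 4"
    and j1: "q^2 - 1 \<le> j" "j \<le> 2*q^2 - 3"
    and h: "h \<le> DD" and R: "Rel q \<alpha> n h x y"
  shows "(h \<le> q^2 - 2 \<longrightarrow> pcount q \<alpha> n DD j x y = 0)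
       \<and> (q^2 - 1 \<le> h \<and> h \<le> 2*q^2 - 3 \<longrightarrow> pcount q \<alpha> n DD j x y = card (Phi q (n - 2) :: (nat \<Rightarrow> 'a) set))
       \<and> (h = DD \<longrightarrow> pcount q \<alpha> n DD j x y = q ^ (2*n - 5))"
proof -
  have x: "x \<in> Phi q n" and y: "y \<in> Phi q n" using Rel_Phi[OF R] by auto
  have p: "pcount q \<alpha> n DD j x y = card {z\<in>Phi q n. herm q n x z = 0 \<and> \<not> (\<exists>c. z = smult_vec c x) \<and> herm q n z y = \<alpha> ^ j}"
    unfolding pcount_def using x y j1 by (auto simp: Rel_I2 Rel_D intro!: arg_cong[where f=card])
  have n2: "n = (n - 2) + 2" and n4: "n = (n - 4) + 4" using n by auto
  show ?thesis
  proof (cases rule: h_cases[OF h])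
    case 1
    then have yx: "y = smult_vec (\<alpha> ^ h) x" using R by (simp add: Rel_I1)
    have "herm q n z y = 0" if "herm q n x z = 0" for z
      using herm_sym[of n z x] that by (simp add: yx herm_smult_r sg_mult)
    then have e0: "{z\<in>Phi q n. herm q n x z = 0 \<and> \<not> (\<exists>c. z = smult_vec c x) \<and> herm q n z y = \<alpha> ^ j} = {}" by auto
    have "pcount q \<alpha> n DD j x y = 0" using p e0 by (simp only: card.empty)
    moreover have "\<not> q^2 - 1 \<le> h" "h \<noteq> DD" using 1 q2_ge4 by arith+
    ultimately show ?thesis by simp
  next
    case 2
    then have hxy: "herm q n x y = \<alpha> ^ h" using R by (simp add: Rel_I2)
    define d where "d = \<alpha> ^ j / \<alpha> ^ h"
    have dnz: "d \<noteq> 0" by (simp add: d_def)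
    define w where "w = smult_vec d x"
    let ?S = "{z\<in>Phi q n. herm q n x z = 0 \<and> herm q n z y = \<alpha> ^ j}"
    have wS: "w \<in> ?S"
      using smult_Phi[OF x dnz] hxy Phi_Q[OF x] by (simp add: w_def herm_smult_r herm_smult_l d_def)
    have key: "(\<exists>c. z = smult_vec c x) \<longleftrightarrow> z = w" if z: "z \<in> ?S" for z
    proof
      assume "\<exists>c. z = smult_vec c x"
      then obtain c where c: "z = smult_vec c x" by auto
      then have "c * \<alpha> ^ h = \<alpha> ^ j" using z hxy by (simp add: herm_smult_l)
      then have "c = d" by (simp add: d_def field_simps)
      then show "z = w" using c by (simp add: w_def)
    qed (auto simp: w_def)
    have e: "{z\<in>Phi q n. herm q n x z = 0 \<and> \<not> (\<exists>c. z = smult_vec c x) \<and> herm q n z y = \<alpha> ^ j} = ?S - {w}"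
      using key by auto
    have cS: "card ?S = G (n - 2) 0"
      using confB[OF x y hxy _ n2, of 0 "\<alpha>^j"] by (simp add: tr_def)
    have "card (?S - {w}) = card ?S - 1" using wS by (simp add: card_Diff_singleton)
    then have "pcount q \<alpha> n DD j x y = card (Phi q (n - 2) :: (nat \<Rightarrow> 'a) set)"
      using p e cS G_s[of n] by simp
    moreover have "h \<noteq> DD" "\<not> h \<le> q^2 - 2" using 2 q2_ge4 by arith+
    ultimately show ?thesis using 2 by simp
  next
    case 3
    then have hxy: "herm q n x y = 0" and ind: "\<not> (\<exists>c. y = smult_vec c x)" using R by (auto simp: Rel_D)
    have "\<not> (\<exists>c. z = smult_vec c x)" if z1: "herm q n z y = \<alpha> ^ j" for z
    proof
      assume "\<exists>c. z = smult_vec c x"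
      then obtain c where "z = smult_vec c x" by blast
      then show False using z1 hxy by (simp add: herm_smult_l)
    qed
    then have e: "{z\<in>Phi q n. herm q n x z = 0 \<and> \<not> (\<exists>c. z = smult_vec c x) \<and> herm q n z y = \<alpha> ^ j}
        = {z\<in>Phi q n. herm q n x z = 0 \<and> herm q n z y = \<alpha> ^ j}" by auto
    have c0: "card {z\<in>Phi q n. herm q n x z = 0 \<and> herm q n z y = \<alpha> ^ j} = q^(2*(n-4)+3)"
      using confC[OF x y hxy ind n4, of 0 "\<alpha>^j"] by simp
    have ex: "2*(n-4)+3 = 2*n - 5" using n by simp
    have "q ^ (2*(n-4)+3) = q ^ (2*n - 5)" by (simp only: ex)
    then have "pcount q \<alpha> n DD j x y = q ^ (2*n - 5)" using c0 p e by simp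
    moreover have "\<not> h \<le> q^2 - 2" "\<not> h \<le> 2*q^2 - 3" using 3 q2_ge4 by arith+
    ultimately show ?thesis using 3 by simp
  qed
qed

end


context uf
begin

lemma case9:
  fixes x y :: "nat \<Rightarrow> 'a"
  assumes n: "n \<ge> 4" and h: "h \<le> DD" and R: "Rel q \<alpha> n h x y"
  shows "(h \<le> q^2 - 2 \<longrightarrow> pcount q \<alpha> n DD DD x y = q^2 * card (Phi q (n - 2) :: (nat \<Rightarrow> 'a) set))
       \<and> (q^2 - 1 \<le> h \<and> h \<le> 2*q^2 - 3 \<longrightarrow> pcount q \<alpha> n DD DD x y = card (Phi q (n - 2) :: (nat \<Rightarrow> 'a) set))
       \<and> (h = DD \<longrightarrow> pcount q \<alpha> n DD DD x y + 2 * M + 1 = q^4 * (card (Phi q (n - 4) :: (nat \<Rightarrow> 'a) set) + 1))"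
proof -
  have x: "x \<in> Phi q n" and y: "y \<in> Phi q n" using Rel_Phi[OF R] by auto
  let ?P = "{z\<in>Phi q n. herm q n x z = 0 \<and> \<not> (\<exists>c. z = smult_vec c x) \<and> herm q n z y = 0 \<and> \<not> (\<exists>c. y = smult_vec c z)}"
  have p: "pcount q \<alpha> n DD DD x y = card ?P"
    unfolding pcount_def using x y by (auto simp: Rel_D intro!: arg_cong[where f=card])
  have n2: "n = (n - 2) + 2" and n4: "n = (n - 4) + 4" using n by auto
  let ?S = "{z\<in>Phi q n. herm q n x z = 0 \<and> herm q n z y = 0}"
  have fS: "finite ?S" using finite_Phi by simp
  have spy: "(\<exists>c. y = smult_vec c z) \<longleftrightarrow> z \<in> spanstar y" if "z \<in> Phi q n" for z
    using y_span_z[OF y that] in_spanstar[OF that] by simp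
  have spx: "(\<exists>c. z = smult_vec c x) \<longleftrightarrow> z \<in> spanstar x" if "z \<in> Phi q n" for z
    using in_spanstar[OF that] by simp
  show ?thesis
  proof (cases rule: h_cases[OF h])
    case 1
    then have yx: "y = smult_vec (\<alpha> ^ h) x" using R by (simp add: Rel_I1)
    let ?A = "{z\<in>Phi q n. herm q n x z = 0}"
    have hzy: "herm q n z y = 0" if "herm q n x z = 0" for z
      using herm_sym[of n z x] that by (simp add: yx herm_smult_r)
    have sp: "(\<exists>c. y = smult_vec c z) \<longleftrightarrow> (\<exists>c. z = smult_vec c x)" if "z \<in> Phi q n" for z
      using y_span_z[OF y that] span_scale[of "\<alpha>^h" z x] yx by simp
    have e: "?P = ?A - spanstar x"
    proof -
      have "z \<in> ?P \<longleftrightarrow> z \<in> ?A - spanstar x" for z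
        by (cases "z \<in> Phi q n") (use hzy[of z] sp[of z] spx[of z] in auto)
      then show ?thesis by blast
    qed
    have sub: "spanstar x \<subseteq> ?A"
      using spanstar_sub[OF x] by (auto simp: spanstar_def herm_smult_r Phi_Q[OF x])
    have cA: "card ?A = q^2 * G (n - 2) 0 - 1" using confA[OF x n2, of 0] by simp
    have "card ?P = card ?A - M" using e sub card_Diff_subset[OF finite_subset[OF sub] sub] card_spanstar[OF x]
      by (simp add: finite_Phi)
    then have "pcount q \<alpha> n DD DD x y = q^2 * (card (Phi q (n - 2) :: (nat \<Rightarrow> 'a) set) + 1) - 1 - M"
      using p cA G_s[of n] by simp
    also have "\<dots> = q^2 * card (Phi q (n - 2) :: (nat \<Rightarrow> 'a) set)"
    proof -
      define Q where "Q = q^2"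
      define s where "s = card (Phi q (n - 2) :: (nat \<Rightarrow> 'a) set)"
      have "Q \<ge> 4" using q2_ge4 by (simp add: Q_def)
      then have "Q * (s + 1) - 1 - (Q - 1) = Q * s" by (simp add: algebra_simps)
      then show ?thesis by (simp add: Q_def s_def)
    qed
    finally have "pcount q \<alpha> n DD DD x y = q^2 * card (Phi q (n - 2) :: (nat \<Rightarrow> 'a) set)" .
    moreover have "\<not> q^2 - 1 \<le> h" "h \<noteq> DD" using 1 q2_ge4 by arith+
    ultimately show ?thesis by simp
  next
    case 2
    then have hxy: "herm q n x y = \<alpha> ^ h" using R by (simp add: Rel_I2)
    have a1: "\<not> (\<exists>c. z = smult_vec c x)" if "z \<in> ?S" for z
    proof
      assume "\<exists>c. z = smult_vec c x"
      then obtain c where c: "z = smult_vec c x" by blast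
      then have "c \<noteq> 0" using smult_nz_coeff[OF Phi_nz] that by blast
      then show False using that c hxy by (simp add: herm_smult_l)
    qed
    have a2: "\<not> (\<exists>c. y = smult_vec c z)" if "z \<in> ?S" for z
    proof
      assume "\<exists>c. y = smult_vec c z"
      then obtain c where c: "y = smult_vec c z" by blast
      then show False using that hxy by (simp add: herm_smult_r)
    qed
    have e: "?P = ?S" using a1 a2 by blast
    have cS: "card ?S = G (n - 2) 0 - 1"
      using confB[OF x y hxy _ n2, of 0 0] by (simp add: tr_def)
    then have "pcount q \<alpha> n DD DD x y = card (Phi q (n - 2) :: (nat \<Rightarrow> 'a) set)"
      using p e G_s[of n] by simp
    moreover have "h \<noteq> DD" "\<not> h \<le> q^2 - 2" using 2 q2_ge4 by arith+
    ultimately show ?thesis using 2 by simp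
  next
    case 3
    then have hxy: "herm q n x y = 0" and ind: "\<not> (\<exists>c. y = smult_vec c x)" using R by (auto simp: Rel_D)
    have e: "?P = ?S - spanstar x - spanstar y" using spx spy by auto
    have subx: "spanstar x \<subseteq> ?S"
      using spanstar_sub[OF x] hxy by (auto simp: spanstar_def herm_smult_r herm_smult_l Phi_Q[OF x])
    have suby: "spanstar y \<subseteq> ?S - spanstar x"
    proof
      fix z assume z: "z \<in> spanstar y"
      then obtain d where d: "d \<noteq> 0" "z = smult_vec d y" by (auto simp: spanstar_def)
      have "z \<in> ?S" using spanstar_sub[OF y] z d hxy by (auto simp: herm_smult_r herm_smult_l Phi_Q[OF y])
      moreover have "z \<notin> spanstar x"
      proof
        assume "z \<in> spanstar x"
        then obtain c where c: "c \<noteq> 0" "z = smult_vec c x" by (auto simp: spanstar_def)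
        then have "smult_vec d y = smult_vec c x" using d by simp
        then have "smult_vec (1/d) (smult_vec d y) = smult_vec (1/d) (smult_vec c x)" by simp
        then have "y = smult_vec (c/d) x" using d by (simp add: smult_smult)
        then show False using ind by blast
      qed
      ultimately show "z \<in> ?S - spanstar x" by blast
    qed
    have c1: "card (?S - spanstar x) = card ?S - M"
      using card_Diff_subset[OF finite_subset[OF subx fS] subx] card_spanstar[OF x] by simp
    have c2: "card (?S - spanstar x - spanstar y) = card (?S - spanstar x) - M"
      using card_Diff_subset[OF finite_subset[OF suby] suby] card_spanstar[OF y] fS by simp
    have cS: "card ?S = q^4 * G (n - 4) 0 - 1"
      using confC[OF x y hxy ind n4, of 0 0] by simp
    have G4: "G (n - 4) 0 = card (Phi q (n - 4) :: (nat \<Rightarrow> 'a) set) + 1" using card_Phi[of "n - 4"] by simp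
    have le: "2 * M + 1 \<le> q^4 * G (n - 4) 0"
    proof -
      have "G (n - 4) 0 \<ge> 1" using G4 by simp
      then have "q^4 * G (n - 4) 0 \<ge> q^4" by simp
      moreover have "q^2 * q^2 = q^4" by (simp flip: power_add)
      moreover have "q^2 * q^2 \<ge> 4 * q^2" using mult_right_mono[OF q2_ge4, of "q^2"] by simp
      moreover have "M + 1 = q^2" using q2_ge4 by simp
      ultimately show ?thesis by linarith
    qed
    have "pcount q \<alpha> n DD DD x y = q^4 * G (n - 4) 0 - 1 - M - M" using p e c1 c2 cS by simp
    then have "pcount q \<alpha> n DD DD x y + 2 * M + 1 = q^4 * G (n - 4) 0" using le by linarith
    then have "pcount q \<alpha> n DD DD x y + 2 * M + 1 = q^4 * (card (Phi q (n - 4) :: (nat \<Rightarrow> 'a) set) + 1)"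
      using G4 by (simp del: G.simps)
    moreover have "\<not> h \<le> q^2 - 2" "\<not> h \<le> 2*q^2 - 3" using 3 q2_ge4 by arith+
    ultimately show ?thesis using 3 by blast
  qed
qed

end


lemma aux_fin: "P + 2 * (Q^2 - 1) + 1 = Q^4 * (c + 1) \<Longrightarrow> P = (Q^2 - 1)^2 + Q^4 * c" for P Q c :: int
proof -
  assume h: "P + 2 * (Q^2 - 1) + 1 = Q^4 * (c + 1)"
  have "(Q^2 - 1)^2 = Q^4 - 2 * Q^2 + 1" by (simp add: power2_eq_square power4_eq_xxxx algebra_simps)
  then show ?thesis using h by (simp add: algebra_simps)
qed

theorem mainTheorem14:
  fixes q n :: nat and \<alpha> :: "'a::{field,finite}"
  assumes "primepow q"
    and "CARD('a) = q^2"
    and "n \<ge> 4"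
    and "primitive_elem \<alpha>"
  defines "D \<equiv> 2*q^2 - 2"
    and "I1 \<equiv> {0..q^2 - 2}"
    and "I2 \<equiv> {q^2 - 1..2*q^2 - 3}"
    and "s \<equiv> card (Phi q (n - 2) :: (nat \<Rightarrow> 'a) set)"
    and "t \<equiv> (if even q then 0 else (q + 1) div 2)"
    and "M \<equiv> q^2 - 1"
  shows "\<forall>h i j x y. h \<le> D \<longrightarrow> i \<le> D \<longrightarrow> j \<le> D \<longrightarrow> Rel q \<alpha> n h x y \<longrightarrow>
     (let p = int (pcount q \<alpha> n i j x y) in
      (i \<in> I1 \<and> j \<in> I1 \<longrightarrow>
         p = (if h \<in> I1 \<and> [h = i + j] (mod M) then 1 else 0)) \<and>
      (i \<in> I1 \<and> j \<in> I2 \<longrightarrow>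
         p = (if h \<in> I2 \<and> [h + i = j] (mod M) then 1 else 0)) \<and>
      (i \<in> I1 \<and> j = D \<longrightarrow>
         p = (if h = D then 1 else 0)) \<and>
      (i \<in> I2 \<and> j \<in> I1 \<longrightarrow>
         p = (if h \<in> I2 \<and> [h = i + j * q] (mod M) then 1 else 0)) \<and>
      (i \<in> I2 \<and> j \<in> I2 \<longrightarrow>
         (h \<in> I1 \<longrightarrow> p = (if [q * (h + i) = j] (mod M) then int q ^ (2*n - 3) else 0)) \<and>
         (h \<in> I2 \<longrightarrow> p = (if [i + j = h + t] (mod (q + 1)) then int s + 1
                          else int q ^ (2*n - 5) + (- int q) ^ (n - 3))) \<and>
         (h = D \<longrightarrow> p = int q ^ (2*n - 5))) \<and>
      (i \<in> I2 \<and> j = D \<longrightarrow>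
         (h \<in> I1 \<longrightarrow> p = 0) \<and> (h \<in> I2 \<longrightarrow> p = int s) \<and> (h = D \<longrightarrow> p = int q ^ (2*n - 5))) \<and>
      (i = D \<and> j \<in> I1 \<longrightarrow>
         p = (if h = D then 1 else 0)) \<and>
      (i = D \<and> j \<in> I2 \<longrightarrow>
         (h \<in> I1 \<longrightarrow> p = 0) \<and> (h \<in> I2 \<longrightarrow> p = int s) \<and> (h = D \<longrightarrow> p = int q ^ (2*n - 5))) \<and>
      (i = D \<and> j = D \<longrightarrow>
         (h \<in> I1 \<longrightarrow> p = int q ^ 2 * int s) \<and> (h \<in> I2 \<longrightarrow> p = int s) \<and>
         (h = D \<longrightarrow> p = (int q ^ 2 - 1) ^ 2 + int q ^ 4 * int (card (Phi q (n - 4) :: (nat \<Rightarrow> 'a) set)))))"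
proof -
  interpret uf q \<alpha> by unfold_locales (use assms(1,2,4) in auto)
  have n4: "n \<ge> 4" using assms(3) .
  have Dq: "D = 2*q^2 - 2" by (simp add: D_def)
  have I1m: "\<And>l. l \<in> I1 \<longleftrightarrow> l \<le> q^2 - 2" by (simp add: I1_def)
  have I2m: "\<And>l. l \<in> I2 \<longleftrightarrow> q^2 - 1 \<le> l \<and> l \<le> 2*q^2 - 3" by (simp add: I2_def)
  have tq: "t = tt" by (simp add: t_def tt_def)
  have Mq: "M = q^2 - 1" by (simp add: M_def)
  have sq: "s = card (Phi q (n - 2) :: (nat \<Rightarrow> 'a) set)" by (simp add: s_def)
  show ?thesis
  proof (intro allI impI)
    fix h i j x y
    assume h: "h \<le> D" and i: "i \<le> D" and j: "j \<le> D" and R: "Rel q \<alpha> n h x y"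
    have h': "h \<le> DD" using h Dq by simp
    define p where "p = int (pcount q \<alpha> n i j x y)"
    have c1: "i \<in> I1 \<and> j \<in> I1 \<longrightarrow> p = (if h \<in> I1 \<and> [h = i + j] (mod M) then 1 else 0)"
      using case1[of i j h n x y] h' R by (auto simp: I1m Mq p_def)
    have c2: "i \<in> I1 \<and> j \<in> I2 \<longrightarrow> p = (if h \<in> I2 \<and> [h + i = j] (mod M) then 1 else 0)"
      using case2[of i j h n x y] h' R by (auto simp: I1m I2m Mq p_def)
    have c3: "i \<in> I1 \<and> j = D \<longrightarrow> p = (if h = D then 1 else 0)"
      using case3[of i h n x y] h' R by (auto simp: I1m Dq p_def)
    have c4: "i \<in> I2 \<and> j \<in> I1 \<longrightarrow> p = (if h \<in> I2 \<and> [h = i + j * q] (mod M) then 1 else 0)"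
      using case4[of i j h n x y] h' R by (auto simp: I1m I2m Mq p_def)
    have c5: "i \<in> I2 \<and> j \<in> I2 \<longrightarrow>
         (h \<in> I1 \<longrightarrow> p = (if [q * (h + i) = j] (mod M) then int q ^ (2*n - 3) else 0)) \<and>
         (h \<in> I2 \<longrightarrow> p = (if [i + j = h + t] (mod (q + 1)) then int s + 1
                          else int q ^ (2*n - 5) + (- int q) ^ (n - 3))) \<and>
         (h = D \<longrightarrow> p = int q ^ (2*n - 5))"
      using case5[OF n4, of i j h x y] h' R by (auto simp: I1m I2m Mq p_def tq sq Dq)
    have c6: "i \<in> I2 \<and> j = D \<longrightarrow>
         (h \<in> I1 \<longrightarrow> p = 0) \<and> (h \<in> I2 \<longrightarrow> p = int s) \<and> (h = D \<longrightarrow> p = int q ^ (2*n - 5))"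
      using case6[OF n4, of i h x y] h' R by (auto simp: I1m I2m p_def sq Dq)
    have c7: "i = D \<and> j \<in> I1 \<longrightarrow> p = (if h = D then 1 else 0)"
      using case7[of j h n x y] h' R by (auto simp: I1m Dq p_def)
    have c8: "i = D \<and> j \<in> I2 \<longrightarrow>
         (h \<in> I1 \<longrightarrow> p = 0) \<and> (h \<in> I2 \<longrightarrow> p = int s) \<and> (h = D \<longrightarrow> p = int q ^ (2*n - 5))"
      using case8[OF n4, of j h x y] h' R by (auto simp: I1m I2m p_def sq Dq)
    have c9: "i = D \<and> j = D \<longrightarrow>
         (h \<in> I1 \<longrightarrow> p = int q ^ 2 * int s) \<and> (h \<in> I2 \<longrightarrow> p = int s) \<and>
         (h = D \<longrightarrow> p = (int q ^ 2 - 1) ^ 2 + int q ^ 4 * int (card (Phi q (n - 4) :: (nat \<Rightarrow> 'a) set)))"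
    proof (intro impI)
      assume ij: "i = D \<and> j = D"
      then have ij': "i = DD" "j = DD" using Dq by auto
      note C = case9[OF n4 h' R]
      have a: "h \<in> I1 \<longrightarrow> p = int q ^ 2 * int s" using C ij' by (auto simp: I1m p_def sq)
      have b: "h \<in> I2 \<longrightarrow> p = int s" using C ij' by (auto simp: I2m p_def sq)
      have c: "h = D \<longrightarrow> p = (int q ^ 2 - 1) ^ 2 + int q ^ 4 * int (card (Phi q (n - 4) :: (nat \<Rightarrow> 'a) set))"
      proof
        assume "h = D"
        then have "pcount q \<alpha> n DD DD x y + 2 * (q^2 - 1) + 1 = q^4 * (card (Phi q (n - 4) :: (nat \<Rightarrow> 'a) set) + 1)"
          using C Dq by simp
        then have "int (pcount q \<alpha> n DD DD x y + 2 * (q^2 - 1) + 1) = int (q^4 * (card (Phi q (n - 4) :: (nat \<Rightarrow> 'a) set) + 1))"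
          by (rule arg_cong)
        then have e: "int (pcount q \<alpha> n DD DD x y) + 2 * int (q^2 - 1) + 1 = int q ^ 4 * (int (card (Phi q (n - 4) :: (nat \<Rightarrow> 'a) set)) + 1)"
          by (simp only: of_nat_add of_nat_mult of_nat_power of_nat_1 of_nat_numeral)
        have m: "int (q^2 - 1) = int q ^ 2 - 1" using q2_ge4 by (simp add: of_nat_diff)
        have "p = int (pcount q \<alpha> n DD DD x y)" using ij' by (simp add: p_def)
        then show "p = (int q ^ 2 - 1) ^ 2 + int q ^ 4 * int (card (Phi q (n - 4) :: (nat \<Rightarrow> 'a) set))"
          using aux_fin[of "int (pcount q \<alpha> n DD DD x y)" "int q"] e m by simp
      qed
      show "(h \<in> I1 \<longrightarrow> p = int q ^ 2 * int s) \<and> (h \<in> I2 \<longrightarrow> p = int s) \<and>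
         (h = D \<longrightarrow> p = (int q ^ 2 - 1) ^ 2 + int q ^ 4 * int (card (Phi q (n - 4) :: (nat \<Rightarrow> 'a) set)))"
        using a b c by blast
    qed
    show "let p = int (pcount q \<alpha> n i j x y) in
      (i \<in> I1 \<and> j \<in> I1 \<longrightarrow>
         p = (if h \<in> I1 \<and> [h = i + j] (mod M) then 1 else 0)) \<and>
      (i \<in> I1 \<and> j \<in> I2 \<longrightarrow>
         p = (if h \<in> I2 \<and> [h + i = j] (mod M) then 1 else 0)) \<and>
      (i \<in> I1 \<and> j = D \<longrightarrow>
         p = (if h = D then 1 else 0)) \<and>
      (i \<in> I2 \<and> j \<in> I1 \<longrightarrow>
         p = (if h \<in> I2 \<and> [h = i + j * q] (mod M) then 1 else 0)) \<and>
      (i \<in> I2 \<and> j \<in> I2 \<longrightarrow>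
         (h \<in> I1 \<longrightarrow> p = (if [q * (h + i) = j] (mod M) then int q ^ (2*n - 3) else 0)) \<and>
         (h \<in> I2 \<longrightarrow> p = (if [i + j = h + t] (mod (q + 1)) then int s + 1
                          else int q ^ (2*n - 5) + (- int q) ^ (n - 3))) \<and>
         (h = D \<longrightarrow> p = int q ^ (2*n - 5))) \<and>
      (i \<in> I2 \<and> j = D \<longrightarrow>
         (h \<in> I1 \<longrightarrow> p = 0) \<and> (h \<in> I2 \<longrightarrow> p = int s) \<and> (h = D \<longrightarrow> p = int q ^ (2*n - 5))) \<and>
      (i = D \<and> j \<in> I1 \<longrightarrow>
         p = (if h = D then 1 else 0)) \<and>
      (i = D \<and> j \<in> I2 \<longrightarrow>
         (h \<in> I1 \<longrightarrow> p = 0) \<and> (h \<in> I2 \<longrightarrow> p = int s) \<and> (h = D \<longrightarrow> p = int q ^ (2*n - 5))) \<and>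
      (i = D \<and> j = D \<longrightarrow>
         (h \<in> I1 \<longrightarrow> p = int q ^ 2 * int s) \<and> (h \<in> I2 \<longrightarrow> p = int s) \<and>
         (h = D \<longrightarrow> p = (int q ^ 2 - 1) ^ 2 + int q ^ 4 * int (card (Phi q (n - 4) :: (nat \<Rightarrow> 'a) set))))"
      unfolding Let_def p_def[symmetric] using c1 c2 c3 c4 c5 c6 c7 c8 c9 by blast
  qed
qed


end
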